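(* Fix $n$ and $r$ with $0\le r<\lfloor n/2\rfloor$, and let $a=\lfloor n/2\rfloor$. For any prime power $q$, any nontrivial additive character $\psi$ of $\mathbb F_q$ and any rank-one matrix $T\in M_{a,n-a}(\mathbb F_q)$, the number $$\widehat 1_{\mathcal O_r}(T)=\sum_{A\in\mathcal O_r}\psi(\mathrm{trace}(T^tA))$$ is a positive integer, and as $q\to\infty$, $$\widehat 1_{\mathcal O_r}(T)=\left(\frac1{q^r}+o\!\left(\frac1{q^r}\right)\right)\#(\mathcal O_r).$$
   Context: $\mathcal O_r\subset M_{a,n-a}(\mathbb F_q)$ is the set of $a\times(n-a)$ matrices of rank $r$. *)

theory Defs
  imports "HOL-Algebra.Ring" Complex_Main
begin

text \<open>Finite fields are represented as HOL-Algebra field records whose carrier lives in nat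
(every finite field is isomorphic to such a one), so that the statement can quantify over all
finite fields at once (needed for the asymptotics q \<rightarrow> \<infinity>).\<close>

definition matrices :: "nat ring \<Rightarrow> nat \<Rightarrow> nat \<Rightarrow> (nat \<Rightarrow> nat \<Rightarrow> nat) set" where
  "matrices F a m = {A. (\<forall>i<a. \<forall>j<m. A i j \<in> carrier F) \<and>
                        (\<forall>i j. \<not> (i < a \<and> j < m) \<longrightarrow> A i j = 0)}"

definition lin_indep_cols :: "nat ring \<Rightarrow> nat \<Rightarrow> (nat \<Rightarrow> nat \<Rightarrow> nat) \<Rightarrow> nat set \<Rightarrow> bool" where
  "lin_indep_cols F a A S \<longleftrightarrow>
     (\<forall>c \<in> S \<rightarrow> carrier F.
        (\<forall>i<a. (\<Oplus>\<^bsub>F\<^esub> j\<in>S. c j \<otimes>\<^bsub>F\<^esub> A i j) = \<zero>\<^bsub>F\<^esub>) \<longrightarrow> (\<forall>j\<in>S. c j = \<zero>\<^bsub>F\<^esub>))"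

definition mat_rank :: "nat ring \<Rightarrow> nat \<Rightarrow> nat \<Rightarrow> (nat \<Rightarrow> nat \<Rightarrow> nat) \<Rightarrow> nat" where
  "mat_rank F a m A = Max {card S | S. S \<subseteq> {..<m} \<and> lin_indep_cols F a A S}"

definition rank_orbit :: "nat ring \<Rightarrow> nat \<Rightarrow> nat \<Rightarrow> nat \<Rightarrow> (nat \<Rightarrow> nat \<Rightarrow> nat) set" where
  "rank_orbit F a m r = {A \<in> matrices F a m. mat_rank F a m A = r}"

definition nontriv_add_char :: "nat ring \<Rightarrow> (nat \<Rightarrow> complex) \<Rightarrow> bool" where
  "nontriv_add_char F \<psi> \<longleftrightarrow>
     (\<forall>x\<in>carrier F. cmod (\<psi> x) = 1) \<and>
     (\<forall>x\<in>carrier F. \<forall>y\<in>carrier F. \<psi> (x \<oplus>\<^bsub>F\<^esub> y) = \<psi> x * \<psi> y) \<and>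
     (\<exists>x\<in>carrier F. \<psi> x \<noteq> 1)"

definition trace_tA :: "nat ring \<Rightarrow> nat \<Rightarrow> nat \<Rightarrow> (nat \<Rightarrow> nat \<Rightarrow> nat) \<Rightarrow> (nat \<Rightarrow> nat \<Rightarrow> nat) \<Rightarrow> nat" where
  "trace_tA F a m T A = (\<Oplus>\<^bsub>F\<^esub> i\<in>{..<a}. \<Oplus>\<^bsub>F\<^esub> j\<in>{..<m}. T i j \<otimes>\<^bsub>F\<^esub> A i j)"

definition fourier_orbit ::
  "nat ring \<Rightarrow> (nat \<Rightarrow> complex) \<Rightarrow> nat \<Rightarrow> nat \<Rightarrow> nat \<Rightarrow> (nat \<Rightarrow> nat \<Rightarrow> nat) \<Rightarrow> complex" where
  "fourier_orbit F \<psi> a m r T = (\<Sum>A\<in>rank_orbit F a m r. \<psi> (trace_tA F a m T A))"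

end

theory Submission
  imports Defs "HOL-Library.FuncSet"
begin


fun gq :: "nat \<Rightarrow> nat \<Rightarrow> nat \<Rightarrow> nat" where
  "gq q 0 r = (if r = 0 then 1 else 0)"
| "gq q (Suc n) 0 = 1"
| "gq q (Suc n) (Suc r) = q ^ Suc r * gq q n (Suc r) + gq q n r"

definition Pq :: "nat \<Rightarrow> nat \<Rightarrow> nat \<Rightarrow> nat" where
  "Pq q d r = (\<Prod>i<r. q ^ d - q ^ i)"

lemma gq_0[simp]: "gq q n 0 = 1" by (cases n) auto
lemma Pq_0[simp]: "Pq q d 0 = 1" by (simp add: Pq_def)
lemma Pq_Suc: "Pq q d (Suc s) = Pq q d s * (q ^ d - q ^ s)" by (simp add: Pq_def)

lemma gq_gt: "n < r \<Longrightarrow> gq q n r = 0"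
proof (induction n arbitrary: r)
  case 0 then show ?case by simp
next
  case (Suc n) then show ?case by (cases r) auto
qed

lemma gq_diag: "gq q n n = 1"
  by (induction n) (auto simp: gq_gt)

lemma gq_pos: "r \<le> n \<Longrightarrow> 0 < gq q n r"
proof (induction n arbitrary: r)
  case 0 then show ?case by simp
next
  case (Suc n) then show ?case by (cases r) auto
qed

lemma Pq_pos: "2 \<le> q \<Longrightarrow> r \<le> d \<Longrightarrow> 0 < Pq q d r"
  unfolding Pq_def by (intro prod_pos) (auto intro: power_strict_increasing)

lemma gq_ratio: "2 \<le> q \<Longrightarrow> r < n \<Longrightarrow> gq q n r < q ^ Suc r * gq q n (Suc r)"
proof (induction n arbitrary: r)
  case 0 then show ?case by simp
next
  case (Suc n)
  show ?case
  proof (cases r)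
    case 0
    have "1 \<le> gq q (Suc n) 1" using gq_pos[of 1 "Suc n" q] by simp
    then have "1 * 1 < q * gq q (Suc n) 1" using Suc.prems by (intro mult_less_le_imp_less) auto
    then show ?thesis using 0 by simp
  next
    case (Suc r')
    have r'n: "r' < n" using Suc.prems Suc by simp
    have IH: "gq q n r' < q ^ Suc r' * gq q n (Suc r')" using Suc.IH[OF Suc.prems(1) r'n] .
    have "gq q (Suc n) r = q ^ Suc r' * gq q n (Suc r') + gq q n r'" using Suc by simp
    also have "\<dots> < q ^ Suc r' * gq q n (Suc r') + q ^ Suc r' * gq q n (Suc r')" using IH by simp
    also have "\<dots> = 2 * (q ^ Suc r' * gq q n (Suc r'))" by simp
    also have "\<dots> \<le> q * (q ^ Suc r' * gq q n (Suc r'))" using Suc.prems by (intro mult_le_mono1)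
    also have "\<dots> = q ^ Suc r * gq q n r" using Suc by simp
    also have "\<dots> \<le> q ^ Suc r * gq q (Suc n) (Suc r)" using Suc by simp
    finally show ?thesis .
  qed
qed

lemma positivity:
  assumes q: "2 \<le> q" and ra: "r \<le> a'" and am: "a' \<le> m'"
  shows "(if 0 < r then q ^ (r - 1) * (gq q m' (r - 1) * Pq q a' (r - 1)) else 0) <
         q ^ r * (gq q m' r * Pq q a' r)"
proof (cases r)
  case 0 then show ?thesis using gq_pos[of 0 m' q] Pq_pos[OF q, of 0 a'] q by simp
next
  case (Suc s)
  have P: "0 < Pq q a' s" using Pq_pos[OF q, of s a'] Suc ra by simp
  have g: "gq q m' s < q ^ Suc s * gq q m' (Suc s)" using gq_ratio[OF q, of s m'] Suc ra am by simp
  have "q ^ Suc s \<le> q ^ a'" using Suc ra q by (intro power_increasing) auto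
  then have h1: "q * q ^ s \<le> q ^ a'" by simp
  have h2: "2 * q ^ s \<le> q * q ^ s" using q by (intro mult_le_mono1)
  have "2 * q ^ s \<le> q ^ a'" using order_trans[OF h2 h1] .
  then have d: "q ^ s \<le> q ^ a' - q ^ s" by simp
  have "q ^ s * (gq q m' s * Pq q a' s) = (gq q m' s * q ^ s) * Pq q a' s" by simp
  also have "\<dots> < (q ^ Suc s * gq q m' (Suc s) * q ^ s) * Pq q a' s"
    using g P q by simp
  also have "\<dots> \<le> (q ^ Suc s * gq q m' (Suc s) * (q ^ a' - q ^ s)) * Pq q a' s"
    using d by (intro mult_le_mono1 mult_le_mono2)
  also have "\<dots> = q ^ r * (gq q m' r * Pq q a' r)" using Suc by (simp add: Pq_Suc)
  finally show ?thesis using Suc by simp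
qed


lemma inv_pow_lim: "0 < k \<Longrightarrow> ((\<lambda>q::nat. (1 / real q) ^ k) \<longlongrightarrow> 0) sequentially"
proof -
  assume k: "0 < k"
  have "((\<lambda>q::nat. (1 / real q) ^ k) \<longlongrightarrow> 0 ^ k) sequentially"
    by (intro tendsto_power lim_inverse_n')
  then show ?thesis unfolding zero_power[OF k] .
qed

lemma XP_eq:
  assumes q: "1 \<le> q" and rd: "r \<le> d"
  shows "real (Pq q d r) / real q ^ (d * r) = (\<Prod>i<r. 1 - (1 / real q) ^ (d - i))"
proof -
  have xp: "0 < real q" using q by simp
  have "real (Pq q d r) = (\<Prod>i<r. real q ^ d - real q ^ i)"
    unfolding Pq_def of_nat_prod
  proof (rule prod.cong[OF refl])
    fix i assume "i \<in> {..<r}"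
    then have "q ^ i \<le> q ^ d" using rd q by (intro power_increasing) auto
    then show "real (q ^ d - q ^ i) = real q ^ d - real q ^ i" by (simp add: of_nat_diff)
  qed
  moreover have "real q ^ (d * r) = (\<Prod>i<r. real q ^ d)" by (simp add: power_mult)
  ultimately have "real (Pq q d r) / real q ^ (d * r) = (\<Prod>i<r. (real q ^ d - real q ^ i) / real q ^ d)"
    by (simp add: prod_dividef)
  also have "\<dots> = (\<Prod>i<r. 1 - (1 / real q) ^ (d - i))"
  proof (rule prod.cong[OF refl])
    fix i assume "i \<in> {..<r}"
    then have id: "d = i + (d - i)" using rd by simp
    have "real q ^ d = real q ^ i * real q ^ (d - i)" by (subst id) (simp add: power_add)
    then show "(real q ^ d - real q ^ i) / real q ^ d = 1 - (1 / real q) ^ (d - i)"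
      using xp by (simp add: field_simps power_one_over)
  qed
  finally show ?thesis .
qed

lemma XP_lim:
  assumes rd: "r \<le> d"
  shows "((\<lambda>q. real (Pq q d r) / real q ^ (d * r)) \<longlongrightarrow> 1) sequentially"
proof -
  have "((\<lambda>q::nat. \<Prod>i<r. 1 - (1 / real q) ^ (d - i)) \<longlongrightarrow> (\<Prod>i<r. 1 - 0)) sequentially"
  proof (rule tendsto_prod)
    fix i assume "i \<in> {..<r}"
    then have "0 < d - i" using rd by simp
    then show "((\<lambda>q::nat. 1 - (1 / real q) ^ (d - i)) \<longlongrightarrow> 1 - 0) sequentially"
      by (intro tendsto_diff tendsto_const inv_pow_lim)
  qed
  then have "((\<lambda>q::nat. \<Prod>i<r. 1 - (1 / real q) ^ (d - i)) \<longlongrightarrow> 1) sequentially" by simp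
  moreover have "eventually (\<lambda>q. (\<Prod>i<r. 1 - (1 / real q) ^ (d - i)) = real (Pq q d r) / real q ^ (d * r)) sequentially"
    using eventually_ge_at_top[of 1] by eventually_elim (simp add: XP_eq rd)
  ultimately show ?thesis by (rule Lim_transform_eventually)
qed


lemma Xg_step:
  fixes x G1 G0 :: real
  assumes x: "0 < x" and sn: "s < n"
  shows "(x ^ Suc s * G1 + G0) / x ^ (Suc s * (Suc n - Suc s)) =
     G1 / x ^ (Suc s * (n - Suc s)) + G0 / x ^ (s * (n - s)) * (1 / x) ^ (n - s)"
proof -
  define E where "E = Suc s * (Suc n - Suc s)"
  obtain t where t: "n = Suc s + t" using sn less_iff_Suc_add by auto
  have E1: "E = Suc s * (n - Suc s) + Suc s" unfolding E_def t by simp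
  have E0: "E = s * (n - s) + (n - s)" unfolding E_def t by simp
  have "(x ^ Suc s * G1 + G0) / x ^ E = x ^ Suc s * G1 / x ^ E + G0 / x ^ E" by (rule add_divide_distrib)
  also have "x ^ Suc s * G1 / x ^ E = G1 / x ^ (Suc s * (n - Suc s))"
    unfolding E1 power_add using x by (simp add: field_simps)
  also have "G0 / x ^ E = G0 / x ^ (s * (n - s)) * (1 / x) ^ (n - s)"
    unfolding E0 power_add using x by (simp add: field_simps power_one_over)
  finally show ?thesis unfolding E_def .
qed

lemma Xg_lim: "r \<le> n \<Longrightarrow> ((\<lambda>q. real (gq q n r) / real q ^ (r * (n - r))) \<longlongrightarrow> 1) sequentially"
proof (induction n arbitrary: r)
  case 0 then show ?case by simp
next
  case (Suc n)
  show ?case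
  proof (cases r)
    case 0 then show ?thesis by simp
  next
    case (Suc s)
    show ?thesis
    proof (cases "s = n")
      case True then show ?thesis using Suc by (simp add: gq_diag)
    next
      case False
      then have sn: "s < n" using Suc Suc.prems by simp
      have l1: "((\<lambda>q. real (gq q n (Suc s)) / real q ^ (Suc s * (n - Suc s))) \<longlongrightarrow> 1) sequentially"
        using Suc.IH[of "Suc s"] sn by simp
      have l0: "((\<lambda>q. real (gq q n s) / real q ^ (s * (n - s))) \<longlongrightarrow> 1) sequentially"
        using Suc.IH[of s] sn by simp
      have "((\<lambda>q. real (gq q n (Suc s)) / real q ^ (Suc s * (n - Suc s)) +
          real (gq q n s) / real q ^ (s * (n - s)) * (1 / real q) ^ (n - s)) \<longlongrightarrow> 1 + 1 * 0) sequentially"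
        using sn by (intro tendsto_add tendsto_mult l1 l0 inv_pow_lim) simp
      then have lim: "((\<lambda>q. real (gq q n (Suc s)) / real q ^ (Suc s * (n - Suc s)) +
          real (gq q n s) / real q ^ (s * (n - s)) * (1 / real q) ^ (n - s)) \<longlongrightarrow> 1) sequentially" by simp
      have "eventually (\<lambda>q. real (gq q n (Suc s)) / real q ^ (Suc s * (n - Suc s)) +
          real (gq q n s) / real q ^ (s * (n - s)) * (1 / real q) ^ (n - s) =
          real (gq q (Suc n) r) / real q ^ (r * (Suc n - r))) sequentially"
        using eventually_ge_at_top[of 1]
      proof eventually_elim
        case (elim q)
        have "real (gq q (Suc n) r) = real q ^ Suc s * real (gq q n (Suc s)) + real (gq q n s)"
          using Suc by simp
        then show ?case using Xg_step[of "real q" s n "real (gq q n (Suc s))" "real (gq q n s)"] elim sn Suc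
          by simp
      qed
      then show ?thesis using lim by (rule Lim_transform_eventually[rotated])
    qed
  qed
qed


lemma ratio_identity:
  fixes x g1 p1 g2 p2 g3 p3 x1a x1b x2a x2b x3a x3b :: real
  assumes x: "0 < x" and g3: "g3 \<noteq> 0" "p3 \<noteq> 0"
    and nz: "x1a \<noteq> 0" "x1b \<noteq> 0" "x2a \<noteq> 0" "x2b \<noteq> 0" "x3a \<noteq> 0" "x3b \<noteq> 0"
    and e1: "x3a * x3b = x1a * x1b * x ^ (2 * r)"
    and e2: "x3a * x3b = x2a * x2b * x ^ t * x ^ (2 * s + 1)"
    and r: "r = Suc s"
  shows "(x ^ r * (g1 * p1) - x ^ s * (g2 * p2)) * x ^ r / (g3 * p3) =
    (g1 / x1a * (p1 / x1b) - g2 / x2a * (p2 / x2b) * (1 / x) ^ t) / (g3 / x3a * (p3 / x3b))"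
proof -
  have xr: "x ^ r * x ^ r = x ^ (2 * r)" by (simp add: power_add[symmetric] mult_2)
  have xs: "x ^ s * x ^ r = x ^ (2 * s + 1)" using r by (simp add: power_add[symmetric] mult_2)
  have xt: "x ^ t \<noteq> 0" using x by simp
  have "(g1 / x1a * (p1 / x1b) - g2 / x2a * (p2 / x2b) * (1 / x) ^ t) / (g3 / x3a * (p3 / x3b)) =
     (g1 * p1 * (x3a * x3b) / (x1a * x1b) - g2 * p2 * (x3a * x3b) / (x2a * x2b * x ^ t)) / (g3 * p3)"
    using nz g3 xt by (simp add: field_simps power_one_over)
  also have "\<dots> = (g1 * p1 * x ^ (2 * r) - g2 * p2 * x ^ (2 * s + 1)) / (g3 * p3)"
  proof -
    have f1: "g1 * p1 * (x3a * x3b) / (x1a * x1b) = g1 * p1 * x ^ (2 * r)"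
      unfolding e1 using nz by simp
    have f2: "g2 * p2 * (x3a * x3b) / (x2a * x2b * x ^ t) = g2 * p2 * x ^ (2 * s + 1)"
      unfolding e2 using nz xt by simp
    show ?thesis unfolding f1 f2 ..
  qed
  also have "\<dots> = (x ^ r * (g1 * p1) - x ^ s * (g2 * p2)) * x ^ r / (g3 * p3)"
    unfolding xr[symmetric] xs[symmetric] by (simp add: algebra_simps)
  finally show ?thesis by (rule sym)
qed


definition Dval :: "nat \<Rightarrow> nat \<Rightarrow> nat \<Rightarrow> nat \<Rightarrow> real" where
  "Dval q a m r = real (q ^ r * (gq q (m - 1) r * Pq q (a - 1) r)) -
    (if 0 < r then real (q ^ (r - 1) * (gq q (m - 1) (r - 1) * Pq q (a - 1) (r - 1))) else 0)"

definition Nval :: "nat \<Rightarrow> nat \<Rightarrow> nat \<Rightarrow> nat \<Rightarrow> real" where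
  "Nval q a m r = real (gq q m r * Pq q a r)"

lemma Nval_pos: "2 \<le> q \<Longrightarrow> r \<le> a \<Longrightarrow> r \<le> m \<Longrightarrow> 0 < Nval q a m r"
  unfolding Nval_def using gq_pos Pq_pos by simp

lemma ratio_lim:
  assumes a: "1 \<le> a" "a \<le> m" "r < a"
  shows "((\<lambda>q. Dval q a m r * real q ^ r / Nval q a m r) \<longlongrightarrow> 1) sequentially"
proof (cases r)
  case 0
  have "(\<lambda>q. Dval q a m r * real q ^ r / Nval q a m r) = (\<lambda>q. 1)"
    by (rule ext) (simp add: Dval_def Nval_def 0)
  then show ?thesis by simp
next
  case (Suc s)
  define a' where "a' = a - 1"
  define m' where "m' = m - 1"
  have sa: "Suc s \<le> a'" using a Suc unfolding a'_def by simp
  have sm: "Suc s \<le> m'" using a Suc unfolding a'_def m'_def by simp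
  define w where "w = a' - Suc s"
  define u where "u = m' - Suc s"
  have w: "a' = Suc s + w" using sa unfolding w_def by simp
  have u: "m' = Suc s + u" using sm unfolding u_def by simp
  have aa: "a = Suc a'" and mm: "m = Suc m'" using a unfolding a'_def m'_def by auto
  define t where "t = m' + a' - 2 * s"
  have t: "t = u + w + 2" unfolding t_def u w by simp
  define G1 where "G1 = (\<lambda>q. real (gq q m' r) / real q ^ (r * (m' - r)))"
  define P1 where "P1 = (\<lambda>q. real (Pq q a' r) / real q ^ (a' * r))"
  define G2 where "G2 = (\<lambda>q. real (gq q m' s) / real q ^ (s * (m' - s)))"
  define P2 where "P2 = (\<lambda>q. real (Pq q a' s) / real q ^ (a' * s))"
  define G3 where "G3 = (\<lambda>q. real (gq q m r) / real q ^ (r * (m - r)))"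
  define P3 where "P3 = (\<lambda>q. real (Pq q a r) / real q ^ (a * r))"
  have lG1: "(G1 \<longlongrightarrow> 1) sequentially" unfolding G1_def by (rule Xg_lim) (simp add: u Suc)
  have lP1: "(P1 \<longlongrightarrow> 1) sequentially" unfolding P1_def by (rule XP_lim) (simp add: w Suc)
  have lG2: "(G2 \<longlongrightarrow> 1) sequentially" unfolding G2_def by (rule Xg_lim) (simp add: u)
  have lP2: "(P2 \<longlongrightarrow> 1) sequentially" unfolding P2_def by (rule XP_lim) (simp add: w)
  have lG3: "(G3 \<longlongrightarrow> 1) sequentially" unfolding G3_def by (rule Xg_lim) (use a in simp)
  have lP3: "(P3 \<longlongrightarrow> 1) sequentially" unfolding P3_def by (rule XP_lim) (use a in simp)
  have "((\<lambda>q. (G1 q * P1 q - G2 q * P2 q * (1 / real q) ^ t) / (G3 q * P3 q)) \<longlongrightarrow> (1 * 1 - 1 * 1 * 0) / (1 * 1)) sequentially"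
    using t by (intro tendsto_divide tendsto_diff tendsto_mult lG1 lP1 lG2 lP2 lG3 lP3 inv_pow_lim) simp_all
  then have lim: "((\<lambda>q. (G1 q * P1 q - G2 q * P2 q * (1 / real q) ^ t) / (G3 q * P3 q)) \<longlongrightarrow> 1) sequentially" by simp
  have "eventually (\<lambda>q. (G1 q * P1 q - G2 q * P2 q * (1 / real q) ^ t) / (G3 q * P3 q) =
      Dval q a m r * real q ^ r / Nval q a m r) sequentially"
    using eventually_ge_at_top[of 2]
  proof eventually_elim
    case (elim q)
    have x: "0 < real q" using elim by simp
    have g3: "real (gq q m r) \<noteq> 0" using gq_pos[of r m q] a by simp
    have p3: "real (Pq q a r) \<noteq> 0" using Pq_pos[OF elim, of r a] a by simp
    have e1: "real q ^ (r * (m - r)) * real q ^ (a * r) = real q ^ (r * (m' - r)) * real q ^ (a' * r) * real q ^ (2 * r)"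
    proof -
      have ex1: "r * (m - r) + a * r = r * (m' - r) + a' * r + 2 * r" by (simp add: mm aa u w Suc algebra_simps)
      show ?thesis by (simp only: power_add[symmetric] ex1)
    qed
    have e2: "real q ^ (r * (m - r)) * real q ^ (a * r) = real q ^ (s * (m' - s)) * real q ^ (a' * s) * real q ^ t * real q ^ (2 * s + 1)"
    proof -
      have ex2: "r * (m - r) + a * r = s * (m' - s) + a' * s + t + (2 * s + 1)" by (simp add: mm aa u w Suc t algebra_simps)
      show ?thesis by (simp only: power_add[symmetric] ex2)
    qed
    have D: "Dval q a m r = real q ^ r * (real (gq q m' r) * real (Pq q a' r)) - real q ^ s * (real (gq q m' s) * real (Pq q a' s))"
      unfolding Dval_def a'_def[symmetric] m'_def[symmetric] using Suc by simp
    have N: "Nval q a m r = real (gq q m r) * real (Pq q a r)" by (simp add: Nval_def)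
    show ?case unfolding D N G1_def P1_def G2_def P2_def G3_def P3_def
      by (rule ratio_identity[symmetric, OF x g3 p3 _ _ _ _ _ _ e1 e2 Suc]) (use x in simp_all)
  qed
  then show ?thesis using lim by (rule Lim_transform_eventually[rotated])
qed

lemma asym:
  assumes a: "1 \<le> a" "a \<le> m" "r < a" and e: "0 < \<epsilon>"
  shows "\<exists>Q::nat. \<forall>q\<ge>Q. 2 \<le> q \<longrightarrow> \<bar>Dval q a m r - Nval q a m r / real q ^ r\<bar> \<le> \<epsilon> * Nval q a m r / real q ^ r"
proof -
  have "eventually (\<lambda>q. dist (Dval q a m r * real q ^ r / Nval q a m r) 1 < \<epsilon>) sequentially"
    using ratio_lim[OF a] e by (rule tendstoD)
  then obtain Q where Q: "\<And>q. Q \<le> q \<Longrightarrow> dist (Dval q a m r * real q ^ r / Nval q a m r) 1 < \<epsilon>"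
    unfolding eventually_sequentially by blast
  show ?thesis
  proof (intro exI[of _ Q] allI impI)
    fix q assume qQ: "Q \<le> q" and q2: "2 \<le> q"
    define N where "N = Nval q a m r"
    define D where "D = Dval q a m r"
    define x where "x = real q ^ r"
    have N: "0 < N" unfolding N_def using Nval_pos[OF q2] a by simp
    have x: "0 < x" unfolding x_def using q2 by simp
    have d: "\<bar>D * x / N - 1\<bar> < \<epsilon>" using Q[OF qQ] by (simp add: dist_real_def D_def N_def x_def)
    have "D - N / x = (D * x / N - 1) * (N / x)" using N x by (simp add: field_simps)
    then have "\<bar>D - N / x\<bar> = \<bar>D * x / N - 1\<bar> * (N / x)" using N x by (simp add: abs_mult)
    also have "\<dots> \<le> \<epsilon> * (N / x)" using d N x by (intro mult_right_mono) auto
    finally show "\<bar>Dval q a m r - Nval q a m r / real q ^ r\<bar> \<le> \<epsilon> * Nval q a m r / real q ^ r"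
      unfolding D_def[symmetric] N_def[symmetric] x_def[symmetric] by simp
  qed
qed




lemma sum_PiE_insert:
  assumes "k \<notin> J"
  shows "(\<Sum>A\<in>insert k J \<rightarrow>\<^sub>E W. f A) = (\<Sum>B\<in>J \<rightarrow>\<^sub>E W. \<Sum>w\<in>W. f (B(k := w)))"
proof -
  have "(\<Sum>A\<in>insert k J \<rightarrow>\<^sub>E W. f A) = (\<Sum>(w, B)\<in>W \<times> (J \<rightarrow>\<^sub>E W). f (B(k := w)))"
    using assms
    by (intro sum.reindex_bij_witness[of _ "\<lambda>(y,g). g(k := y)" "\<lambda>g. (g k, g(k := undefined))"])
       (auto simp: PiE_def extensional_def)
  also have "\<dots> = (\<Sum>w\<in>W. \<Sum>B\<in>J \<rightarrow>\<^sub>E W. f (B(k := w)))"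
    by (subst sum.cartesian_product) auto
  also have "\<dots> = (\<Sum>B\<in>J \<rightarrow>\<^sub>E W. \<Sum>w\<in>W. f (B(k := w)))" by (rule sum.swap)
  finally show ?thesis .
qed

locale vsp = field F for F :: "nat ring" (structure) +
  fixes a :: nat
  assumes finF: "finite (carrier F)"
begin

definition vecs :: "(nat \<Rightarrow> nat) set" where
  "vecs = {x. (\<forall>i<a. x i \<in> carrier F) \<and> (\<forall>i. a \<le> i \<longrightarrow> x i = 0)}"
definition vz :: "nat \<Rightarrow> nat" where "vz = (\<lambda>i. if i < a then \<zero> else 0)"
definition vadd :: "(nat \<Rightarrow> nat) \<Rightarrow> (nat \<Rightarrow> nat) \<Rightarrow> (nat \<Rightarrow> nat)" where
  "vadd x y = (\<lambda>i. if i < a then x i \<oplus> y i else 0)"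
definition vsc :: "nat \<Rightarrow> (nat \<Rightarrow> nat) \<Rightarrow> (nat \<Rightarrow> nat)" where
  "vsc c x = (\<lambda>i. if i < a then c \<otimes> x i else 0)"
definition lc :: "nat set \<Rightarrow> (nat \<Rightarrow> nat) \<Rightarrow> (nat \<Rightarrow> nat \<Rightarrow> nat) \<Rightarrow> (nat \<Rightarrow> nat)" where
  "lc J c A = (\<lambda>i. if i < a then (\<Oplus>j\<in>J. c j \<otimes> A j i) else 0)"
definition subsp :: "(nat \<Rightarrow> nat) set \<Rightarrow> bool" where
  "subsp W \<longleftrightarrow> W \<subseteq> vecs \<and> vz \<in> W \<and> (\<forall>x\<in>W. \<forall>y\<in>W. vadd x y \<in> W) \<and>
     (\<forall>c\<in>carrier F. \<forall>x\<in>W. vsc c x \<in> W)"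
definition span :: "nat set \<Rightarrow> (nat \<Rightarrow> nat \<Rightarrow> nat) \<Rightarrow> (nat \<Rightarrow> nat) set" where
  "span J A = {lc J c A |c. c \<in> J \<rightarrow> carrier F}"
definition indep :: "nat set \<Rightarrow> (nat \<Rightarrow> nat \<Rightarrow> nat) \<Rightarrow> bool" where
  "indep J A \<longleftrightarrow> (\<forall>c\<in>J \<rightarrow> carrier F. lc J c A = vz \<longrightarrow> (\<forall>j\<in>J. c j = \<zero>))"
definition vext :: "(nat \<Rightarrow> nat) set \<Rightarrow> (nat \<Rightarrow> nat) \<Rightarrow> (nat \<Rightarrow> nat) set" where
  "vext S w = {vadd x (vsc c w) |x c. x \<in> S \<and> c \<in> carrier F}"
definition dot :: "(nat \<Rightarrow> nat) \<Rightarrow> (nat \<Rightarrow> nat) \<Rightarrow> nat" where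
  "dot u x = (\<Oplus>i\<in>{..<a}. u i \<otimes> x i)"

lemma vec_eqI:
  assumes "x \<in> vecs" "y \<in> vecs" "\<And>i. i < a \<Longrightarrow> x i = y i" shows "x = y"
proof (rule ext)
  fix i show "x i = y i" using assms by (cases "i < a") (auto simp: vecs_def)
qed

lemma vecsD: "x \<in> vecs \<Longrightarrow> i < a \<Longrightarrow> x i \<in> carrier F"
  unfolding vecs_def by auto

lemma vz_vecs[simp]: "vz \<in> vecs" unfolding vecs_def vz_def by auto
lemma vadd_vecs[simp]: "x \<in> vecs \<Longrightarrow> y \<in> vecs \<Longrightarrow> vadd x y \<in> vecs"
  unfolding vecs_def vadd_def by auto
lemma vsc_vecs[simp]: "c \<in> carrier F \<Longrightarrow> x \<in> vecs \<Longrightarrow> vsc c x \<in> vecs"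
  unfolding vecs_def vsc_def by auto
lemma lc_vecs[simp]: "c \<in> J \<rightarrow> carrier F \<Longrightarrow> (\<And>j. j \<in> J \<Longrightarrow> A j \<in> vecs) \<Longrightarrow> lc J c A \<in> vecs"
  unfolding vecs_def lc_def by (auto intro!: finsum_closed simp: Pi_def)

lemma vz_app: "i < a \<Longrightarrow> vz i = \<zero>" by (simp add: vz_def)
lemma vadd_app: "i < a \<Longrightarrow> vadd x y i = x i \<oplus> y i" by (simp add: vadd_def)
lemma vsc_app: "i < a \<Longrightarrow> vsc c x i = c \<otimes> x i" by (simp add: vsc_def)
lemma lc_app: "i < a \<Longrightarrow> lc J c A i = (\<Oplus>j\<in>J. c j \<otimes> A j i)" by (simp add: lc_def)

lemmas vapp = vz_app vadd_app vsc_app lc_app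

lemma lc_empty[simp]: "lc {} c A = vz"
  unfolding lc_def vz_def by auto

lemma lc_insert:
  assumes "finite J" "k \<notin> J" "c \<in> insert k J \<rightarrow> carrier F" "\<And>j. j \<in> insert k J \<Longrightarrow> A j \<in> vecs"
  shows "lc (insert k J) c A = vadd (vsc (c k) (A k)) (lc J c A)"
proof (rule ext)
  fix i show "lc (insert k J) c A i = vadd (vsc (c k) (A k)) (lc J c A) i"
  proof (cases "i < a")
    case True
    have "(\<lambda>j. c j \<otimes> A j i) \<in> J \<rightarrow> carrier F" "c k \<otimes> A k i \<in> carrier F"
      using assms True by (auto simp: Pi_def vecsD)
    then show ?thesis using True assms by (simp add: vapp finsum_insert)
  qed (simp add: lc_def vadd_def)
qed

lemma lc_cong:
  assumes "\<And>j. j \<in> J \<Longrightarrow> c j = d j" "\<And>j. j \<in> J \<Longrightarrow> A j = B j"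
    "c \<in> J \<rightarrow> carrier F" "\<And>j. j \<in> J \<Longrightarrow> A j \<in> vecs"
  shows "lc J c A = lc J d B"
proof (rule ext)
  fix i show "lc J c A i = lc J d B i"
  proof (cases "i < a")
    case True
    have "(\<lambda>j. d j \<otimes> B j i) \<in> J \<rightarrow> carrier F" using assms True by (auto simp: Pi_def vecsD)
    then show ?thesis using True assms by (auto simp: lc_def intro!: finsum_cong')
  qed (simp add: lc_def)
qed


lemma finsum_delta:
  assumes "finite A" "l \<in> A" "f \<in> A \<rightarrow> carrier F" "\<And>i. i \<in> A \<Longrightarrow> i \<noteq> l \<Longrightarrow> f i = \<zero>"
  shows "(\<Oplus>i\<in>A. f i) = f l"
proof -
  have A: "A = insert l (A - {l})" using assms by auto
  have "(\<Oplus>i\<in>A - {l}. f i) = (\<Oplus>i\<in>A - {l}. \<zero>)"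
    using assms by (intro finsum_cong') auto
  also have "\<dots> = \<zero>" by (rule finsum_zero)
  finally have z: "(\<Oplus>i\<in>A - {l}. f i) = \<zero>" .
  have "(\<Oplus>i\<in>insert l (A - {l}). f i) = f l \<oplus> (\<Oplus>i\<in>A - {l}. f i)"
    using assms by (intro finsum_insert) auto
  then have "(\<Oplus>i\<in>A. f i) = f l \<oplus> (\<Oplus>i\<in>A - {l}. f i)" using A by metis
  moreover have "f l \<in> carrier F" using assms by auto
  ultimately show ?thesis using z by simp
qed

lemma lc_add:
  assumes "c \<in> J \<rightarrow> carrier F" "d \<in> J \<rightarrow> carrier F" "\<And>j. j \<in> J \<Longrightarrow> A j \<in> vecs"
  shows "vadd (lc J c A) (lc J d A) = lc J (\<lambda>j. c j \<oplus> d j) A"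
proof (rule vec_eqI)
  show "lc J (\<lambda>j. c j \<oplus> d j) A \<in> vecs" using assms by (auto intro!: lc_vecs)
  fix i assume i: "i < a"
  have 1: "(\<lambda>j. c j \<otimes> A j i) \<in> J \<rightarrow> carrier F" "(\<lambda>j. d j \<otimes> A j i) \<in> J \<rightarrow> carrier F"
    using assms i by (auto simp: Pi_def vecsD)
  have "(\<Oplus>j\<in>J. (c j \<oplus> d j) \<otimes> A j i) = (\<Oplus>j\<in>J. c j \<otimes> A j i \<oplus> d j \<otimes> A j i)"
    using assms i by (intro finsum_cong') (auto simp: Pi_def vecsD l_distr)
  then show "vadd (lc J c A) (lc J d A) i = lc J (\<lambda>j. c j \<oplus> d j) A i"
    using 1 i by (simp add: vapp finsum_addf)
qed (use assms in auto)

lemma lc_sc: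
  assumes "e \<in> carrier F" "c \<in> J \<rightarrow> carrier F" "\<And>j. j \<in> J \<Longrightarrow> A j \<in> vecs" "finite J"
  shows "vsc e (lc J c A) = lc J (\<lambda>j. e \<otimes> c j) A"
proof (rule vec_eqI)
  show "lc J (\<lambda>j. e \<otimes> c j) A \<in> vecs" using assms by (auto intro!: lc_vecs)
  fix i assume i: "i < a"
  have 1: "(\<lambda>j. c j \<otimes> A j i) \<in> J \<rightarrow> carrier F"
    using assms i by (auto simp: Pi_def vecsD)
  have "(\<Oplus>j\<in>J. (e \<otimes> c j) \<otimes> A j i) = (\<Oplus>j\<in>J. e \<otimes> (c j \<otimes> A j i))"
    using assms i by (intro finsum_cong') (auto simp: Pi_def vecsD m_assoc)
  then show "vsc e (lc J c A) i = lc J (\<lambda>j. e \<otimes> c j) A i"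
    using 1 i assms by (simp add: vapp finsum_rdistr)
qed (use assms in auto)

lemma lc_zero:
  assumes "\<And>j. j \<in> J \<Longrightarrow> A j \<in> vecs"
  shows "lc J (\<lambda>_. \<zero>) A = vz"
proof (rule vec_eqI)
  fix i assume i: "i < a"
  have "(\<Oplus>j\<in>J. \<zero> \<otimes> A j i) = (\<Oplus>j\<in>J. \<zero>)"
    using assms i by (intro finsum_cong') (auto simp: vecsD)
  then show "lc J (\<lambda>_. \<zero>) A i = vz i" using i by (simp add: vapp)
qed (use assms in auto)

lemma lc_delta:
  assumes "finite J" "l \<in> J" "\<And>j. j \<in> J \<Longrightarrow> A j \<in> vecs"
  shows "lc J (\<lambda>j. if j = l then \<one> else \<zero>) A = A l"
proof (rule vec_eqI)
  fix i assume i: "i < a"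
  have "(\<Oplus>j\<in>J. (if j = l then \<one> else \<zero>) \<otimes> A j i) = (if l = l then \<one> else \<zero>) \<otimes> A l i"
    using assms i by (intro finsum_delta) (auto simp: vecsD)
  then show "lc J (\<lambda>j. if j = l then \<one> else \<zero>) A i = A l i" using i assms by (simp add: vapp vecsD)
qed (use assms in auto)

lemma subspD:
  assumes "subsp W"
  shows "W \<subseteq> vecs" "vz \<in> W" "x \<in> W \<Longrightarrow> y \<in> W \<Longrightarrow> vadd x y \<in> W"
    "c \<in> carrier F \<Longrightarrow> x \<in> W \<Longrightarrow> vsc c x \<in> W"
  using assms unfolding subsp_def by auto

lemma lc_in_subsp:
  assumes "subsp W" "finite J" "c \<in> J \<rightarrow> carrier F" "\<And>j. j \<in> J \<Longrightarrow> A j \<in> W"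
  shows "lc J c A \<in> W"
  using assms(2,3,4)
proof (induction J rule: finite_induct)
  case empty then show ?case using subspD[OF assms(1)] by simp
next
  case (insert k J)
  have v: "\<And>j. j \<in> insert k J \<Longrightarrow> A j \<in> vecs" using insert.prems subspD(1)[OF assms(1)] by auto
  have "lc (insert k J) c A = vadd (vsc (c k) (A k)) (lc J c A)"
    using insert v by (intro lc_insert) auto
  moreover have "lc J c A \<in> W" using insert by auto
  ultimately show ?case using subspD[OF assms(1)] insert.prems by auto
qed

lemma span_mem: "finite J \<Longrightarrow> l \<in> J \<Longrightarrow> (\<And>j. j \<in> J \<Longrightarrow> A j \<in> vecs) \<Longrightarrow> A l \<in> span J A"
  unfolding span_def using lc_delta[of J l A, symmetric] by (auto simp: Pi_def)

lemma span_least: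
  assumes "subsp W" "finite J" "\<And>j. j \<in> J \<Longrightarrow> A j \<in> W"
  shows "span J A \<subseteq> W"
  unfolding span_def using lc_in_subsp[OF assms(1,2) _ assms(3)] by auto

lemma span_subsp:
  assumes "finite J" "\<And>j. j \<in> J \<Longrightarrow> A j \<in> vecs"
  shows "subsp (span J A)"
  unfolding subsp_def
proof (intro conjI ballI)
  show "span J A \<subseteq> vecs" unfolding span_def using assms by auto
  show "vz \<in> span J A" unfolding span_def using lc_zero[of J A] assms by (auto simp: Pi_def intro!: exI[of _ "\<lambda>_. \<zero>"])
  fix x y assume "x \<in> span J A" "y \<in> span J A"
  then obtain c d where "c \<in> J \<rightarrow> carrier F" "d \<in> J \<rightarrow> carrier F" "x = lc J c A" "y = lc J d A"
    unfolding span_def by auto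
  then show "vadd x y \<in> span J A" unfolding span_def using lc_add[of c J d A] assms
    by (auto simp: Pi_def intro!: exI[of _ "\<lambda>j. c j \<oplus> d j"])
next
  fix e x assume "e \<in> carrier F" "x \<in> span J A"
  then obtain c where "c \<in> J \<rightarrow> carrier F" "x = lc J c A"
    unfolding span_def by auto
  then show "vsc e x \<in> span J A" unfolding span_def using lc_sc[of e c J A] assms \<open>e \<in> carrier F\<close>
    by (auto simp: Pi_def intro!: exI[of _ "\<lambda>j. e \<otimes> c j"])
qed

lemma span_cong: "(\<And>j. j \<in> J \<Longrightarrow> A j = B j) \<Longrightarrow> (\<And>j. j \<in> J \<Longrightarrow> A j \<in> vecs) \<Longrightarrow> span J A = span J B"
  unfolding span_def using lc_cong by (smt (verit) Collect_cong)


lemma inv_cl: "x \<in> carrier F \<Longrightarrow> x \<noteq> \<zero> \<Longrightarrow> inv x \<in> carrier F"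
  using field_Units Units_inv_closed by auto
lemma inv_l: "x \<in> carrier F \<Longrightarrow> x \<noteq> \<zero> \<Longrightarrow> inv x \<otimes> x = \<one>"
  using field_Units Units_l_inv by auto
lemma inv_r: "x \<in> carrier F \<Longrightarrow> x \<noteq> \<zero> \<Longrightarrow> x \<otimes> inv x = \<one>"
  using field_Units Units_r_inv by auto
lemma inv_nz: "x \<in> carrier F \<Longrightarrow> x \<noteq> \<zero> \<Longrightarrow> inv x \<noteq> \<zero>"
  using inv_l by fastforce

lemma minus_eq0[simp]:
  assumes "x \<in> carrier F" "y \<in> carrier F"
  shows "x \<ominus> y = \<zero> \<longleftrightarrow> x = y"
  using assms by (metis a_minus_def add.inv_closed minus_equality r_neg)

abbreviation q where "q \<equiv> card (carrier F)"

lemma q_ge2: "2 \<le> q"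
proof -
  have "{\<zero>, \<one>} \<subseteq> carrier F" by auto
  then have "card {\<zero>, \<one>} \<le> q" using finF card_mono by blast
  then show ?thesis by simp
qed

lemma card_vecs: "card vecs = q ^ a" and fin_vecs: "finite vecs"
proof -
  have b: "bij_betw (\<lambda>x. restrict x {..<a}) vecs ({..<a} \<rightarrow>\<^sub>E carrier F)"
  proof (rule bij_betwI[where g = "\<lambda>y i. if i < a then y i else 0"])
    show "(\<lambda>x. restrict x {..<a}) \<in> vecs \<rightarrow> {..<a} \<rightarrow>\<^sub>E carrier F"
      unfolding vecs_def by (simp add: Pi_def)
    show "(\<lambda>y i. if i < a then y i else 0) \<in> ({..<a} \<rightarrow>\<^sub>E carrier F) \<rightarrow> vecs"
      unfolding vecs_def by (simp add: Pi_def PiE_def)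
  next
    fix x assume x: "x \<in> vecs"
    show "(\<lambda>i. if i < a then restrict x {..<a} i else 0) = x"
    proof
      fix i show "(if i < a then restrict x {..<a} i else 0) = x i"
        using x unfolding vecs_def by (cases "i < a") simp_all
    qed
  next
    fix y assume y: "y \<in> {..<a} \<rightarrow>\<^sub>E carrier F"
    show "restrict (\<lambda>i. if i < a then y i else 0) {..<a} = y"
    proof
      fix i show "restrict (\<lambda>i. if i < a then y i else 0) {..<a} i = y i"
        using y unfolding PiE_def extensional_def by (cases "i < a") simp_all
    qed
  qed
  have "card ({..<a} \<rightarrow>\<^sub>E carrier F) = q ^ a" by (simp add: card_PiE)
  then show "card vecs = q ^ a" using bij_betw_same_card[OF b] by simp
  show "finite vecs" using bij_betw_finite[OF b] finF by (simp add: finite_PiE)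
qed

lemma subsp_finite: "subsp W \<Longrightarrow> finite W"
  using subspD(1) fin_vecs finite_subset by blast

lemma span_image:
  assumes "finite J" "\<And>j. j \<in> J \<Longrightarrow> A j \<in> vecs"
  shows "span J A = (\<lambda>c. lc J c A) ` (J \<rightarrow>\<^sub>E carrier F)"
proof
  show "(\<lambda>c. lc J c A) ` (J \<rightarrow>\<^sub>E carrier F) \<subseteq> span J A" unfolding span_def by (auto simp: PiE_def)
  show "span J A \<subseteq> (\<lambda>c. lc J c A) ` (J \<rightarrow>\<^sub>E carrier F)"
  proof
    fix x assume "x \<in> span J A"
    then obtain c where c: "c \<in> J \<rightarrow> carrier F" "x = lc J c A" unfolding span_def by auto
    have "lc J c A = lc J (restrict c J) A" using c(1) assms by (intro lc_cong) auto
    then have "x = lc J (restrict c J) A" using c(2) by simp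
    moreover have "restrict c J \<in> J \<rightarrow>\<^sub>E carrier F" using c by auto
    ultimately show "x \<in> (\<lambda>c. lc J c A) ` (J \<rightarrow>\<^sub>E carrier F)" by blast
  qed
qed

lemma indep_card:
  assumes "finite J" "\<And>j. j \<in> J \<Longrightarrow> A j \<in> vecs" "indep J A"
  shows "card (span J A) = q ^ card J"
proof -
  have "inj_on (\<lambda>c. lc J c A) (J \<rightarrow>\<^sub>E carrier F)"
  proof (rule inj_onI)
    fix c d assume c: "c \<in> J \<rightarrow>\<^sub>E carrier F" and d: "d \<in> J \<rightarrow>\<^sub>E carrier F" and eq: "lc J c A = lc J d A"
    define e where "e = (\<lambda>j. c j \<ominus> d j)"
    have e: "e \<in> J \<rightarrow> carrier F" using c d by (auto simp: e_def)
    have "vadd (lc J e A) (lc J d A) = lc J (\<lambda>j. e j \<oplus> d j) A" using e d assms by (intro lc_add) auto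
    also have "\<dots> = lc J c A" using e d c assms
      by (intro lc_cong) (auto simp: e_def PiE_def Pi_def, algebra)
    finally have eq2: "vadd (lc J e A) (lc J d A) = lc J d A" using eq by simp
    have "lc J e A = vz"
    proof (rule vec_eqI)
      show "lc J e A \<in> vecs" using e assms by auto
      fix i assume i: "i < a"
      have "lc J e A i \<oplus> lc J d A i = lc J d A i" using eq2 i by (metis vadd_app)
      moreover have "lc J e A \<in> vecs" "lc J d A \<in> vecs" using e d assms by (auto simp: PiE_def)
      then have "lc J e A i \<in> carrier F" "lc J d A i \<in> carrier F" using i vecsD by auto
      ultimately show "lc J e A i = vz i" using i by (simp add: vz_app)
    qed auto
    then have "\<forall>j\<in>J. e j = \<zero>" using assms(3) e unfolding indep_def by auto
    then have "\<forall>j\<in>J. c j = d j" using c d by (auto simp: e_def PiE_def Pi_def)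
    then have cd: "\<And>j. j \<in> J \<Longrightarrow> c j = d j" by blast
    show "c = d" by (rule PiE_ext[OF c d cd])
  qed
  then have "card ((\<lambda>c. lc J c A) ` (J \<rightarrow>\<^sub>E carrier F)) = card (J \<rightarrow>\<^sub>E carrier F)" by (rule card_image)
  then have "card (span J A) = card (J \<rightarrow>\<^sub>E carrier F)" using span_image[OF assms(1,2)] by simp
  also have "\<dots> = q ^ card J" using assms(1) by (simp add: card_PiE)
  finally show ?thesis .
qed


lemma solve1:
  assumes c: "c \<in> carrier F" "c \<noteq> \<zero>" and x: "x \<in> carrier F" and y: "y \<in> carrier F"
    and eq: "c \<otimes> x \<oplus> y = \<zero>"
  shows "x = (\<ominus> (inv c)) \<otimes> y"
proof -
  have ic: "inv c \<in> carrier F" using inv_cl c by auto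
  have "\<ominus> y = c \<otimes> x" using minus_equality[OF eq] x y c by auto
  have "x = (inv c \<otimes> c) \<otimes> x" using inv_l c x by simp
  also have "\<dots> = inv c \<otimes> (c \<otimes> x)" using ic c x by (simp add: m_assoc)
  also have "\<dots> = inv c \<otimes> (\<ominus> y)" using \<open>\<ominus> y = c \<otimes> x\<close> by simp
  also have "\<dots> = (\<ominus> (inv c)) \<otimes> y" using ic y by (simp add: r_minus l_minus)
  finally show ?thesis .
qed

lemma vsc_zero: "x \<in> vecs \<Longrightarrow> vsc \<zero> x = vz"
  by (rule vec_eqI) (auto simp: vapp vecsD)
lemma vsc_one: "x \<in> vecs \<Longrightarrow> vsc \<one> x = x"
  by (rule vec_eqI) (auto simp: vapp vecsD)
lemma vadd_vz_left: "x \<in> vecs \<Longrightarrow> vadd vz x = x"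
  by (rule vec_eqI) (auto simp: vapp vecsD)
lemma vadd_vz_right: "x \<in> vecs \<Longrightarrow> vadd x vz = x"
  by (rule vec_eqI) (auto simp: vapp vecsD)

lemma dep_insert:
  assumes J: "finite J" and ind: "indep J A" and j: "j \<notin> J" and dep: "\<not> indep (insert j J) A"
    and v: "\<And>x. x \<in> insert j J \<Longrightarrow> A x \<in> vecs"
  shows "A j \<in> span J A"
proof -
  obtain c k where c: "c \<in> insert j J \<rightarrow> carrier F" and z: "lc (insert j J) c A = vz"
    and k: "k \<in> insert j J" "c k \<noteq> \<zero>"
    using dep unfolding indep_def by auto
  have cJ: "c \<in> J \<rightarrow> carrier F" using c by auto
  have cj: "c j \<in> carrier F" using c by auto
  have L: "lc J c A \<in> vecs" using cJ v by auto
  have eq: "vadd (vsc (c j) (A j)) (lc J c A) = vz" using z lc_insert[OF J j c v] by simp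
  show ?thesis
  proof (cases "c j = \<zero>")
    case True
    then have "lc J c A = vz" using eq vsc_zero[of "A j"] v vadd_vz_left[OF L] by simp
    then have "\<forall>x\<in>J. c x = \<zero>" using ind cJ unfolding indep_def by auto
    then show ?thesis using k True by auto
  next
    case False
    define \<alpha> where "\<alpha> = \<ominus> (inv (c j))"
    have al: "\<alpha> \<in> carrier F" using inv_cl[OF cj False] by (simp add: \<alpha>_def)
    have "A j = vsc \<alpha> (lc J c A)"
    proof (rule vec_eqI)
      show "A j \<in> vecs" using v by auto
      show "vsc \<alpha> (lc J c A) \<in> vecs" using al L by auto
      fix i assume i: "i < a"
      have "c j \<otimes> A j i \<oplus> lc J c A i = \<zero>"
        using arg_cong[OF eq, of "\<lambda>f. f i"] i by (simp add: vapp)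
      then have "A j i = \<alpha> \<otimes> lc J c A i" unfolding \<alpha>_def
        using solve1[OF cj False] v L i by (auto simp: vecsD)
      then show "A j i = vsc \<alpha> (lc J c A) i" using i by (simp add: vapp)
    qed
    also have "\<dots> = lc J (\<lambda>x. \<alpha> \<otimes> c x) A" using lc_sc[OF al cJ _ J] v by auto
    finally show ?thesis unfolding span_def using al cJ by (auto intro!: exI[of _ "\<lambda>x. \<alpha> \<otimes> c x"])
  qed
qed

lemma indep_empty: "indep {} A" unfolding indep_def by auto

lemma rank_span:
  assumes J: "finite J" and v: "\<And>j. j \<in> J \<Longrightarrow> A j \<in> vecs"
  shows "card (span J A) = q ^ Max {card S |S. S \<subseteq> J \<and> indep S A}"
proof -
  define K where "K = {card S |S. S \<subseteq> J \<and> indep S A}"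
  have "K \<subseteq> {..card J}" unfolding K_def using J card_mono by fastforce
  then have finK: "finite K" using finite_subset by blast
  have "0 \<in> K" unfolding K_def using indep_empty by force
  then have "Max K \<in> K" using finK Max_in by blast
  then obtain S0 where S0: "S0 \<subseteq> J" "indep S0 A" "card S0 = Max K" unfolding K_def by auto
  have fS0: "finite S0" using S0 J finite_subset by blast
  have vS0: "\<And>j. j \<in> S0 \<Longrightarrow> A j \<in> vecs" using S0 v by auto
  have mem: "A j \<in> span S0 A" if jJ: "j \<in> J" for j
  proof (cases "j \<in> S0")
    case True then show ?thesis using span_mem[of S0 j A] fS0 vS0 by blast
  next
    case False
    have "\<not> indep (insert j S0) A"
    proof
      assume "indep (insert j S0) A"
      then have "card (insert j S0) \<in> K" unfolding K_def using S0 jJ by blast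
      then have "card (insert j S0) \<le> Max K" using finK by simp
      then show False using S0 fS0 False by simp
    qed
    then show ?thesis using dep_insert[OF fS0 S0(2) False] vS0 v jJ by auto
  qed
  have sS: "subsp (span S0 A)" using span_subsp[of S0 A] fS0 vS0 by blast
  have sJ: "subsp (span J A)" using span_subsp[of J A] J v by blast
  have "span J A \<subseteq> span S0 A" using span_least[of "span S0 A" J A] sS J mem by blast
  moreover have "\<And>j. j \<in> S0 \<Longrightarrow> A j \<in> span J A" using span_mem[of J _ A] J v S0(1) by blast
  then have "span S0 A \<subseteq> span J A"
    using span_least[of "span J A" S0 A] sJ fS0 by blast
  ultimately have "span J A = span S0 A" by auto
  then show ?thesis using indep_card[OF fS0 vS0 S0(2)] S0(3) unfolding K_def by simp
qed


lemma alg1: "c \<in> carrier F \<Longrightarrow> d \<in> carrier F \<Longrightarrow> w \<in> carrier F \<Longrightarrow> x \<in> carrier F \<Longrightarrow> y \<in> carrier F \<Longrightarrow>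
  (c \<ominus> d) \<otimes> w \<oplus> (x \<ominus> y) = (x \<oplus> c \<otimes> w) \<ominus> (y \<oplus> d \<otimes> w)"
  by algebra

lemma solve2:
  assumes "c \<in> carrier F" "d \<in> carrier F" "w \<in> carrier F" "x \<in> carrier F" "y \<in> carrier F"
    and eq: "x \<oplus> c \<otimes> w = y \<oplus> d \<otimes> w" and cd: "c \<noteq> d"
  shows "w = (\<ominus> (inv (c \<ominus> d))) \<otimes> (x \<ominus> y)"
proof -
  have t: "c \<ominus> d \<in> carrier F" "c \<ominus> d \<noteq> \<zero>" using assms by auto
  have "(c \<ominus> d) \<otimes> w \<oplus> (x \<ominus> y) = \<zero>" using alg1[of c d w x y] assms eq by (simp add: r_neg minus_eq)
  then show ?thesis using solve1[OF t] assms by auto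
qed

lemma vsub_in: "subsp S \<Longrightarrow> x \<in> S \<Longrightarrow> y \<in> S \<Longrightarrow> (\<lambda>i. if i < a then x i \<ominus> y i else 0) \<in> S"
proof -
  assume S: "subsp S" and x: "x \<in> S" and y: "y \<in> S"
  have "vadd x (vsc (\<ominus> \<one>) y) \<in> S" using subspD[OF S] x y by auto
  moreover have "vadd x (vsc (\<ominus> \<one>) y) = (\<lambda>i. if i < a then x i \<ominus> y i else 0)"
    using subspD(1)[OF S] x y by (intro ext) (auto simp: vadd_def vsc_def minus_eq l_minus vecsD)
  ultimately show ?thesis by simp
qed

lemma vext_subsp:
  assumes S: "subsp S" and w: "w \<in> vecs"
  shows "subsp (vext S w)"
  unfolding subsp_def
proof (intro conjI ballI)
  note sd = subspD[OF S]
  show "vext S w \<subseteq> vecs" unfolding vext_def using sd w by auto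
  have "vz = vadd vz (vsc \<zero> w)" using vadd_vz_left vsc_zero w by simp
  then show "vz \<in> vext S w" unfolding vext_def using sd by blast
  fix x y assume "x \<in> vext S w" "y \<in> vext S w"
  then obtain x0 c y0 d where xy: "x0 \<in> S" "c \<in> carrier F" "y0 \<in> S" "d \<in> carrier F"
    "x = vadd x0 (vsc c w)" "y = vadd y0 (vsc d w)" unfolding vext_def by blast
  have xv: "x0 \<in> vecs" "y0 \<in> vecs" using xy sd(1) by auto
  have "vadd x y = vadd (vadd x0 y0) (vsc (c \<oplus> d) w)"
  proof
    fix i show "vadd x y i = vadd (vadd x0 y0) (vsc (c \<oplus> d) w) i"
    proof (cases "i < a")
      case True
      have "x0 i \<in> carrier F" "y0 i \<in> carrier F" "w i \<in> carrier F" using xv w True vecsD by auto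
      then show ?thesis using True xy by (simp add: vadd_def vsc_def l_distr a_ac)
    qed (simp add: vadd_def)
  qed
  then show "vadd x y \<in> vext S w" unfolding vext_def using xy sd by blast
next
  note sd = subspD[OF S]
  fix e x assume e: "e \<in> carrier F" and "x \<in> vext S w"
  then obtain x0 c where xy: "x0 \<in> S" "c \<in> carrier F" "x = vadd x0 (vsc c w)" unfolding vext_def by blast
  have xv: "x0 \<in> vecs" using xy sd(1) by auto
  have "vsc e x = vadd (vsc e x0) (vsc (e \<otimes> c) w)"
  proof
    fix i show "vsc e x i = vadd (vsc e x0) (vsc (e \<otimes> c) w) i"
    proof (cases "i < a")
      case True
      have "x0 i \<in> carrier F" "w i \<in> carrier F" using xv w True vecsD by auto
      then show ?thesis using True xy e by (simp add: vadd_def vsc_def r_distr m_assoc)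
    qed (simp add: vadd_def vsc_def)
  qed
  then show "vsc e x \<in> vext S w" unfolding vext_def using xy sd e by blast
qed

lemma vext_sub: assumes "subsp S" "w \<in> vecs" shows "S \<subseteq> vext S w"
proof
  fix x assume x: "x \<in> S"
  then have "x = vadd x (vsc \<zero> w)" using vsc_zero[OF assms(2)] vadd_vz_right subspD(1)[OF assms(1)] by auto
  then show "x \<in> vext S w" unfolding vext_def using x by blast
qed

lemma vext_w: assumes "subsp S" "w \<in> vecs" shows "w \<in> vext S w"
proof -
  have "w = vadd vz (vsc \<one> w)" using vsc_one[OF assms(2)] vadd_vz_left[OF assms(2)] by simp
  then show ?thesis unfolding vext_def using subspD(2)[OF assms(1)] by blast
qed

lemma vext_least: assumes W: "subsp W" and "S \<subseteq> W" "w \<in> W" shows "vext S w \<subseteq> W"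
proof
  fix z assume "z \<in> vext S w"
  then obtain x c where "x \<in> S" "c \<in> carrier F" "z = vadd x (vsc c w)" unfolding vext_def by blast
  then show "z \<in> W" using subspD(3,4)[OF W] assms by auto
qed

lemma vext_in: assumes "subsp S" "w \<in> S" shows "vext S w = S"
proof
  show "vext S w \<subseteq> S" using vext_least[of S S w] assms by blast
  have "w \<in> vecs" using subspD(1)[OF assms(1)] assms(2) by blast
  then show "S \<subseteq> vext S w" using vext_sub[of S w] assms by blast
qed

lemma vext_card:
  assumes S: "subsp S" and w: "w \<in> vecs" "w \<notin> S"
  shows "card (vext S w) = q * card S"
proof -
  note sd = subspD[OF S]
  have "inj_on (\<lambda>(x, c). vadd x (vsc c w)) (S \<times> carrier F)"
  proof (rule inj_onI, clarify)
    fix x c y d assume x: "x \<in> S" and c: "c \<in> carrier F" and y: "y \<in> S" and d: "d \<in> carrier F"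
      and eq: "vadd x (vsc c w) = vadd y (vsc d w)"
    have xv: "x \<in> vecs" and yv: "y \<in> vecs" using x y sd(1) by auto
    have eqi: "x i \<oplus> c \<otimes> w i = y i \<oplus> d \<otimes> w i" if "i < a" for i
      using arg_cong[OF eq, of "\<lambda>f. f i"] that by (simp add: vapp)
    show "x = y \<and> c = d"
    proof (cases "c = d")
      case True
      have "x = y"
      proof (rule vec_eqI[OF xv yv])
        fix i assume i: "i < a"
        show "x i = y i" using eqi[OF i] True xv yv w i c by (simp add: vecsD)
      qed
      then show ?thesis using True by simp
    next
      case False
      define z where "z = (\<lambda>i. if i < a then x i \<ominus> y i else 0)"
      have zS: "z \<in> S" unfolding z_def by (rule vsub_in[OF S x y])
      have "w = vsc (\<ominus> (inv (c \<ominus> d))) z"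
      proof (rule vec_eqI[OF w(1)])
        show "vsc (\<ominus> (inv (c \<ominus> d))) z \<in> vecs" using zS sd(1) c d False inv_cl by auto
        fix i assume i: "i < a"
        show "w i = vsc (\<ominus> (inv (c \<ominus> d))) z i"
          using solve2[OF c d _ _ _ eqi[OF i] False] xv yv w i by (simp add: vapp z_def vecsD)
      qed
      moreover have "vsc (\<ominus> (inv (c \<ominus> d))) z \<in> S" using sd zS c d False inv_cl by auto
      ultimately show ?thesis using w by simp
    qed
  qed
  moreover have "vext S w = (\<lambda>(x, c). vadd x (vsc c w)) ` (S \<times> carrier F)" unfolding vext_def by auto
  ultimately have "card (vext S w) = card (S \<times> carrier F)" by (simp add: card_image)
  then show ?thesis using subsp_finite[OF S] finF by (simp add: card_cartesian_product)
qed


lemma span_insert: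
  assumes J: "finite J" and k: "k \<notin> J" and v: "\<And>j. j \<in> insert k J \<Longrightarrow> A j \<in> vecs"
  shows "span (insert k J) A = vext (span J A) (A k)"
proof
  have vJ: "\<And>j. j \<in> J \<Longrightarrow> A j \<in> vecs" using v by auto
  have sJ: "subsp (span J A)" using span_subsp[of J A] J vJ by blast
  have Ak: "A k \<in> vecs" using v by auto
  have sE: "subsp (vext (span J A) (A k))" using vext_subsp[OF sJ Ak] .
  have "A j \<in> vext (span J A) (A k)" if "j \<in> insert k J" for j
  proof (cases "j = k")
    case True then show ?thesis using vext_w[OF sJ Ak] by simp
  next
    case False
    then have "A j \<in> span J A" using span_mem[of J j A] J vJ that by blast
    then show ?thesis using vext_sub[OF sJ Ak] by blast
  qed
  then show "span (insert k J) A \<subseteq> vext (span J A) (A k)"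
    using span_least[of _ "insert k J" A] sE J by blast
  have fI: "finite (insert k J)" using J by simp
  have sI: "subsp (span (insert k J) A)" using span_subsp[of "insert k J" A] fI v by blast
  have "\<And>j. j \<in> J \<Longrightarrow> A j \<in> span (insert k J) A" using span_mem[of "insert k J" _ A] fI v by blast
  then have "span J A \<subseteq> span (insert k J) A" using span_least[of _ J A] sI J by blast
  moreover have "A k \<in> span (insert k J) A" using span_mem[of "insert k J" k A] fI v by blast
  ultimately show "vext (span J A) (A k) \<subseteq> span (insert k J) A" using vext_least[OF sI] by blast
qed

lemma inner_count:
  assumes W: "subsp W" "card W = q ^ d" and S: "subsp S" "S \<subseteq> W"
  shows "(\<Sum>w\<in>W. if card (vext S w) = q ^ r then 1 else 0 :: nat) =
    (if card S = q ^ r then q ^ r else 0) + (if 0 < r \<and> card S = q ^ (r - 1) then q ^ d - q ^ (r - 1) else 0)"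
proof -
  have fW: "finite W" using subsp_finite[OF W(1)] .
  have fS: "finite S" using subsp_finite[OF S(1)] .
  have Wv: "W \<subseteq> vecs" using subspD(1)[OF W(1)] .
  have split: "W = S \<union> (W - S)" using S by auto
  have "(\<Sum>w\<in>W. if card (vext S w) = q ^ r then 1 else 0 :: nat) =
      (\<Sum>w\<in>S. if card (vext S w) = q ^ r then 1 else 0 :: nat) + (\<Sum>w\<in>W - S. if card (vext S w) = q ^ r then 1 else 0 :: nat)"
    using fW fS by (subst split) (rule sum.union_disjoint, auto)
  also have "(\<Sum>w\<in>S. if card (vext S w) = q ^ r then 1 else 0 :: nat) = (\<Sum>w\<in>S. if card S = q ^ r then 1 else 0 :: nat)"
    using vext_in[OF S(1)] by (intro sum.cong) auto
  also have "\<dots> = (if card S = q ^ r then q ^ r else 0)" by simp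
  also have "(\<Sum>w\<in>W - S. if card (vext S w) = q ^ r then 1 else 0 :: nat) = (\<Sum>w\<in>W - S. if q * card S = q ^ r then 1 else 0 :: nat)"
    using vext_card[OF S(1)] Wv by (intro sum.cong) auto
  also have "\<dots> = (if q * card S = q ^ r then card (W - S) else 0)" by simp
  also have "\<dots> = (if 0 < r \<and> card S = q ^ (r - 1) then q ^ d - q ^ (r - 1) else 0)"
  proof (cases r)
    case 0
    have "q \<noteq> 1" using q_ge2 by simp
    then show ?thesis using 0 by simp
  next
    case (Suc r')
    have "q * card S = q ^ r \<longleftrightarrow> card S = q ^ r'" using Suc q_ge2 by simp
    moreover have "card (W - S) = q ^ d - card S" using card_Diff_subset[OF fS S(2)] W(2) by simp
    ultimately show ?thesis using Suc by auto
  qed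
  finally show ?thesis .
qed

lemma card_filter_sum: "finite P \<Longrightarrow> card {x \<in> P. Q x} = (\<Sum>x\<in>P. if Q x then 1 else 0)"
  by (simp add: sum.If_cases Int_def)

lemma cnt_rec:
  assumes W: "subsp W" "card W = q ^ d" and J: "finite J" and k: "k \<notin> J"
  shows "card {A \<in> insert k J \<rightarrow>\<^sub>E W. card (span (insert k J) A) = q ^ r} =
     q ^ r * card {B \<in> J \<rightarrow>\<^sub>E W. card (span J B) = q ^ r} +
     (if 0 < r then (q ^ d - q ^ (r - 1)) * card {B \<in> J \<rightarrow>\<^sub>E W. card (span J B) = q ^ (r - 1)} else 0)"
proof -
  have fW: "finite W" using subsp_finite[OF W(1)] .
  have Wv: "W \<subseteq> vecs" using subspD(1)[OF W(1)] .
  have "card {A \<in> insert k J \<rightarrow>\<^sub>E W. card (span (insert k J) A) = q ^ r} =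
     (\<Sum>A\<in>insert k J \<rightarrow>\<^sub>E W. if card (span (insert k J) A) = q ^ r then 1 else 0)"
    using fW J by (intro card_filter_sum) (simp add: finite_PiE)
  also have "\<dots> = (\<Sum>B\<in>J \<rightarrow>\<^sub>E W. \<Sum>w\<in>W. if card (span (insert k J) (B(k := w))) = q ^ r then 1 else 0)"
    by (rule sum_PiE_insert[OF k])
  also have "\<dots> = (\<Sum>B\<in>J \<rightarrow>\<^sub>E W. (if card (span J B) = q ^ r then q ^ r else 0) +
       (if 0 < r \<and> card (span J B) = q ^ (r - 1) then q ^ d - q ^ (r - 1) else 0))"
  proof (rule sum.cong[OF refl])
    fix B assume B: "B \<in> J \<rightarrow>\<^sub>E W"
    have vB: "\<And>j. j \<in> J \<Longrightarrow> B j \<in> vecs" using B Wv by auto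
    have sS: "subsp (span J B)" using span_subsp[of J B] J vB by blast
    have SW: "span J B \<subseteq> W" using span_least[of W J B] W(1) J B by auto
    have "\<And>w. w \<in> W \<Longrightarrow> span (insert k J) (B(k := w)) = vext (span J B) w"
    proof -
      fix w assume w: "w \<in> W"
      have "\<And>j. j \<in> insert k J \<Longrightarrow> (B(k := w)) j \<in> vecs" using vB w Wv by auto
      then have e1: "span (insert k J) (B(k := w)) = vext (span J (B(k := w))) ((B(k := w)) k)"
        by (rule span_insert[OF J k])
      have e2: "span J (B(k := w)) = span J B" using k vB by (intro span_cong) auto
      have e3: "(B(k := w)) k = w" by simp
      show "span (insert k J) (B(k := w)) = vext (span J B) w" by (simp only: e1 e2 e3)
    qed
    then have "(\<Sum>w\<in>W. if card (span (insert k J) (B(k := w))) = q ^ r then 1 else 0 :: nat) =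
       (\<Sum>w\<in>W. if card (vext (span J B) w) = q ^ r then 1 else 0 :: nat)"
      by (intro sum.cong) auto
    also note inner_count[OF W sS SW]
    finally show "(\<Sum>w\<in>W. if card (span (insert k J) (B(k := w))) = q ^ r then 1 else 0 :: nat) =
       (if card (span J B) = q ^ r then q ^ r else 0) +
       (if 0 < r \<and> card (span J B) = q ^ (r - 1) then q ^ d - q ^ (r - 1) else 0)" .
  qed
  also have "\<dots> = (\<Sum>B\<in>J \<rightarrow>\<^sub>E W. if card (span J B) = q ^ r then q ^ r else 0) +
       (\<Sum>B\<in>J \<rightarrow>\<^sub>E W. if 0 < r \<and> card (span J B) = q ^ (r - 1) then q ^ d - q ^ (r - 1) else 0)"
    by (rule sum.distrib)
  also have "(\<Sum>B\<in>J \<rightarrow>\<^sub>E W. if card (span J B) = q ^ r then q ^ r else 0) =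
      q ^ r * card {B \<in> J \<rightarrow>\<^sub>E W. card (span J B) = q ^ r}"
    using fW J by (simp add: card_filter_sum finite_PiE sum_distrib_left if_distrib cong: if_cong)
  also have "(\<Sum>B\<in>J \<rightarrow>\<^sub>E W. if 0 < r \<and> card (span J B) = q ^ (r - 1) then q ^ d - q ^ (r - 1) else 0) =
      (if 0 < r then (q ^ d - q ^ (r - 1)) * card {B \<in> J \<rightarrow>\<^sub>E W. card (span J B) = q ^ (r - 1)} else 0)"
    using fW J by (simp add: card_filter_sum finite_PiE sum_distrib_left if_distrib cong: if_cong)
  finally show ?thesis .
qed


lemma span_empty: "span {} A = {vz}" unfolding span_def by auto

lemma cnt_formula:
  assumes W: "subsp W" "card W = q ^ d" and J: "finite J"
  shows "card {A \<in> J \<rightarrow>\<^sub>E W. card (span J A) = q ^ r} = gq q (card J) r * Pq q d r"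
  using J
proof (induction J arbitrary: r rule: finite_induct)
  case empty
  have q1: "q ^ r = 1 \<longleftrightarrow> r = 0" using q_ge2 by simp
  show ?case
  proof (cases r)
    case 0 then show ?thesis by (simp add: span_empty)
  next
    case (Suc s)
    then have "{A \<in> {} \<rightarrow>\<^sub>E W. card (span {} A) = q ^ r} = {}" using q1 by (auto simp: span_empty)
    then show ?thesis using Suc by simp
  qed
next
  case (insert k J)
  note rec = cnt_rec[OF W insert.hyps(1,2), of r]
  show ?case
  proof (cases r)
    case 0 then show ?thesis using rec insert.IH[of 0] by simp
  next
    case (Suc s)
    then show ?thesis using rec insert.IH[of r] insert.IH[of s] insert.hyps
      by (simp add: Pq_Suc algebra_simps)
  qed
qed


lemma dot_closed: "u \<in> vecs \<Longrightarrow> x \<in> vecs \<Longrightarrow> dot u x \<in> carrier F"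
  unfolding dot_def by (intro finsum_closed) (auto simp: vecsD)

lemma dot_add:
  assumes "u \<in> vecs" "x \<in> vecs" "y \<in> vecs"
  shows "dot u (vadd x y) = dot u x \<oplus> dot u y"
proof -
  have "dot u (vadd x y) = (\<Oplus>i\<in>{..<a}. u i \<otimes> x i \<oplus> u i \<otimes> y i)"
    unfolding dot_def using assms by (intro finsum_cong') (auto simp: vapp vecsD r_distr)
  also have "\<dots> = dot u x \<oplus> dot u y" unfolding dot_def
    using assms by (intro finsum_addf) (auto simp: vecsD)
  finally show ?thesis .
qed

lemma dot_sc:
  assumes "u \<in> vecs" "x \<in> vecs" "c \<in> carrier F"
  shows "dot u (vsc c x) = c \<otimes> dot u x"
proof -
  have "dot u (vsc c x) = (\<Oplus>i\<in>{..<a}. c \<otimes> (u i \<otimes> x i))"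
    unfolding dot_def using assms by (intro finsum_cong') (auto simp: vapp vecsD m_lcomm)
  also have "\<dots> = c \<otimes> dot u x" unfolding dot_def
    using assms by (intro finsum_rdistr[symmetric]) (auto simp: vecsD)
  finally show ?thesis .
qed

definition uperp :: "(nat \<Rightarrow> nat) \<Rightarrow> (nat \<Rightarrow> nat) set" where
  "uperp u = {w \<in> vecs. dot u w = \<zero>}"

lemma vz_sc: "vz = vsc \<zero> vz" using vsc_zero[of vz] by simp

lemma uperp_subsp: assumes u: "u \<in> vecs" shows "subsp (uperp u)"
  unfolding subsp_def uperp_def
proof (intro conjI ballI)
  have "dot u vz = \<zero>" using dot_sc[OF u vz_vecs zero_closed] dot_closed[OF u vz_vecs] vz_sc by simp
  then show "vz \<in> {w \<in> vecs. dot u w = \<zero>}" by simp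
qed (auto simp: dot_add dot_sc u)

lemma exists_nonperp:
  assumes u: "u \<in> vecs" "u \<noteq> vz"
  shows "\<exists>w0\<in>vecs. dot u w0 \<noteq> \<zero>"
proof -
  obtain l where l: "l < a" "u l \<noteq> \<zero>"
  proof -
    have "\<not> (\<forall>i<a. u i = vz i)" using vec_eqI[OF u(1) vz_vecs] u(2) by blast
    then show ?thesis using that by (auto simp: vz_app)
  qed
  define e where "e = (\<lambda>i. if i = l then \<one> else if i < a then \<zero> else 0)"
  have ev: "e \<in> vecs" unfolding vecs_def e_def using l by auto
  have "dot u e = u l \<otimes> e l" unfolding dot_def
    using l u ev by (intro finsum_delta) (auto simp: vecsD e_def)
  then have "dot u e = u l" using l u by (simp add: e_def vecsD)
  then show ?thesis using ev l by (intro bexI[of _ e]) auto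
qed

lemma card_uperp:
  assumes u: "u \<in> vecs" "u \<noteq> vz"
  shows "card (uperp u) = q ^ (a - 1)" and "0 < a"
proof -
  obtain w0 where w0: "w0 \<in> vecs" "dot u w0 \<noteq> \<zero>" using exists_nonperp[OF u] by blast
  have U: "subsp (uperp u)" by (rule uperp_subsp[OF u(1)])
  have w0U: "w0 \<notin> uperp u" using w0 by (simp add: uperp_def)
  define t where "t = dot u w0"
  have t: "t \<in> carrier F" "t \<noteq> \<zero>" using w0 dot_closed u by (auto simp: t_def)
  have "vecs \<subseteq> vext (uperp u) w0"
  proof
    fix x assume x: "x \<in> vecs"
    define c where "c = dot u x \<otimes> inv t"
    have c: "c \<in> carrier F" using dot_closed[OF u(1) x] inv_cl[OF t] by (simp add: c_def)
    define y where "y = vadd x (vsc (\<ominus> c) w0)"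
    have yv: "y \<in> vecs" using x w0 c by (simp add: y_def)
    have "dot u y = dot u x \<oplus> (\<ominus> c) \<otimes> t"
      using x w0 c u by (simp add: y_def dot_add dot_sc t_def)
    also have "\<dots> = dot u x \<ominus> dot u x \<otimes> (inv t \<otimes> t)"
      using dot_closed[OF u(1) x] inv_cl[OF t] t by (simp add: c_def l_minus minus_eq m_assoc)
    also have "\<dots> = \<zero>" using inv_l[OF t] dot_closed[OF u(1) x] by (simp add: r_neg minus_eq)
    finally have yU: "y \<in> uperp u" using yv by (simp add: uperp_def)
    have "x = vadd y (vsc c w0)"
    proof (rule vec_eqI[OF x])
      show "vadd y (vsc c w0) \<in> vecs" using yv c w0 by simp
      fix i assume i: "i < a"
      have "x i \<in> carrier F" "w0 i \<in> carrier F" using x w0 i vecsD by auto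
      moreover have "\<And>X W. X \<in> carrier F \<Longrightarrow> W \<in> carrier F \<Longrightarrow> X = X \<oplus> (\<ominus> c) \<otimes> W \<oplus> c \<otimes> W"
        using c by algebra
      ultimately show "x i = vadd y (vsc c w0) i" using i by (simp add: y_def vapp)
    qed
    then show "x \<in> vext (uperp u) w0" unfolding vext_def using yU c by blast
  qed
  moreover have "vext (uperp u) w0 \<subseteq> vecs" using vext_subsp[OF U w0(1)] subspD(1) by blast
  ultimately have "vext (uperp u) w0 = vecs" by blast
  then have "q ^ a = q * card (uperp u)" using vext_card[OF U w0(1) w0U] card_vecs by simp
  moreover show "0 < a"
  proof (rule ccontr)
    assume "\<not> 0 < a"
    then have "u = vz" by (intro vec_eqI[OF u(1) vz_vecs]) auto
    then show False using u by simp
  qed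
  ultimately show "card (uperp u) = q ^ (a - 1)" using q_ge2
    by (metis Suc_diff_1 mult_left_cancel not_numeral_le_zero power_Suc zero_le)
qed


lemma char_zero:
  assumes "nontriv_add_char F \<psi>" shows "\<psi> \<zero> = 1"
proof -
  have h1: "\<psi> (\<zero> \<oplus> \<zero>) = \<psi> \<zero> * \<psi> \<zero>"
    using assms unfolding nontriv_add_char_def by blast
  have h2: "cmod (\<psi> \<zero>) = 1"
    using assms unfolding nontriv_add_char_def by blast
  from h1 have "\<psi> \<zero> * \<psi> \<zero> = \<psi> \<zero> * 1" by simp
  moreover have "\<psi> \<zero> \<noteq> 0" using h2 by auto
  ultimately show ?thesis by (metis mult_left_cancel)
qed

lemma char_sum:
  assumes ch: "nontriv_add_char F \<psi>" and S: "subsp S" and u: "u \<in> vecs"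
  shows "(\<Sum>w\<in>S. \<psi> (dot u w)) = (if S \<subseteq> uperp u then of_nat (card S) else 0)"
proof (cases "S \<subseteq> uperp u")
  case True
  then have "(\<Sum>w\<in>S. \<psi> (dot u w)) = (\<Sum>w\<in>S. 1)" using char_zero[OF ch]
    by (intro sum.cong) (auto simp: uperp_def)
  then show ?thesis using True by simp
next
  case False
  note sd = subspD[OF S]
  obtain w1 where w1S: "w1 \<in> S" and w1n: "w1 \<notin> uperp u" using False by blast
  have w1: "w1 \<in> S" "dot u w1 \<noteq> \<zero>" using w1S w1n sd(1) unfolding uperp_def by auto
  define t where "t = dot u w1"
  have w1v: "w1 \<in> vecs" using w1 sd(1) by auto
  have t: "t \<in> carrier F" "t \<noteq> \<zero>" using w1 dot_closed[OF u w1v] by (auto simp: t_def)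
  obtain x0 where x0: "x0 \<in> carrier F" "\<psi> x0 \<noteq> 1" using ch unfolding nontriv_add_char_def by auto
  have hom: "\<And>x y. x \<in> carrier F \<Longrightarrow> y \<in> carrier F \<Longrightarrow> \<psi> (x \<oplus> y) = \<psi> x * \<psi> y"
    using ch unfolding nontriv_add_char_def by auto
  define w0 where "w0 = vsc (x0 \<otimes> inv t) w1"
  have ct: "x0 \<otimes> inv t \<in> carrier F" using x0 inv_cl[OF t] by simp
  have w0S: "w0 \<in> S" using sd(4)[OF ct w1(1)] by (simp add: w0_def)
  have w0v: "w0 \<in> vecs" using w0S sd(1) by auto
  have "dot u w0 = (x0 \<otimes> inv t) \<otimes> t" using dot_sc[OF u w1v ct] by (simp add: w0_def t_def)
  also have "\<dots> = x0" using x0 inv_l[OF t] inv_cl[OF t] t by (simp add: m_assoc)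
  finally have dw0: "dot u w0 = x0" .
  have m1: "\<ominus> \<one> \<in> carrier F" by simp
  have "(\<Sum>w\<in>S. \<psi> (dot u (vadd w w0))) = (\<Sum>w\<in>S. \<psi> (dot u w))"
  proof (rule sum.reindex_bij_witness[where i = "\<lambda>w. vadd w (vsc (\<ominus> \<one>) w0)" and j = "\<lambda>w. vadd w w0"])
    have alg: "\<And>X Y. X \<in> carrier F \<Longrightarrow> Y \<in> carrier F \<Longrightarrow> X \<oplus> Y \<oplus> (\<ominus> \<one>) \<otimes> Y = X"
      "\<And>X Y. X \<in> carrier F \<Longrightarrow> Y \<in> carrier F \<Longrightarrow> X \<oplus> (\<ominus> \<one>) \<otimes> Y \<oplus> Y = X"
      by (simp_all add: l_minus a_assoc r_neg l_neg)
    fix w assume w: "w \<in> S"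
    have wv: "w \<in> vecs" using w sd(1) by auto
    show "vadd (vadd w w0) (vsc (\<ominus> \<one>) w0) = w"
    proof (rule vec_eqI)
      show "vadd (vadd w w0) (vsc (\<ominus> \<one>) w0) \<in> vecs" using wv w0v m1 by simp
      fix i assume i: "i < a"
      have "w i \<in> carrier F" "w0 i \<in> carrier F" using wv w0v i vecsD by auto
      then show "vadd (vadd w w0) (vsc (\<ominus> \<one>) w0) i = w i" using i alg(1) by (simp add: vapp)
    qed (rule wv)
    show "vadd w w0 \<in> S" using sd(3) w w0S by auto
    show "vadd (vadd w (vsc (\<ominus> \<one>) w0)) w0 = w"
    proof (rule vec_eqI)
      show "vadd (vadd w (vsc (\<ominus> \<one>) w0)) w0 \<in> vecs" using wv w0v m1 by simp
      fix i assume i: "i < a"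
      have "w i \<in> carrier F" "w0 i \<in> carrier F" using wv w0v i vecsD by auto
      then show "vadd (vadd w (vsc (\<ominus> \<one>) w0)) w0 i = w i" using i alg(2) by (simp add: vapp)
    qed (rule wv)
    show "vadd w (vsc (\<ominus> \<one>) w0) \<in> S" using sd(3,4) w w0S m1 by auto
    show "\<psi> (dot u (vadd w w0)) = \<psi> (dot u (vadd w w0))" ..
  qed
  moreover have "(\<Sum>w\<in>S. \<psi> (dot u (vadd w w0))) = \<psi> x0 * (\<Sum>w\<in>S. \<psi> (dot u w))"
  proof -
    have "(\<Sum>w\<in>S. \<psi> (dot u (vadd w w0))) = (\<Sum>w\<in>S. \<psi> (dot u w) * \<psi> x0)"
    proof (rule sum.cong[OF refl])
      fix w assume w: "w \<in> S"
      have wv: "w \<in> vecs" using w sd(1) by auto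
      show "\<psi> (dot u (vadd w w0)) = \<psi> (dot u w) * \<psi> x0"
        using dot_add[OF u wv w0v] dw0 hom[OF dot_closed[OF u wv] x0(1)] by simp
    qed
    then show ?thesis by (simp add: sum_distrib_left mult.commute)
  qed
  ultimately have eqX: "(\<Sum>w\<in>S. \<psi> (dot u w)) = \<psi> x0 * (\<Sum>w\<in>S. \<psi> (dot u w))" by simp
  have "(1 - \<psi> x0) * (\<Sum>w\<in>S. \<psi> (dot u w)) = (\<Sum>w\<in>S. \<psi> (dot u w)) - \<psi> x0 * (\<Sum>w\<in>S. \<psi> (dot u w))"
    by (simp add: left_diff_distrib)
  also have "\<dots> = 0" using eqX by simp
  finally have "(1 - \<psi> x0) * (\<Sum>w\<in>S. \<psi> (dot u w)) = 0" .
  then have "(\<Sum>w\<in>S. \<psi> (dot u w)) = 0" using x0 by simp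
  then show ?thesis using False by simp
qed


definition cols :: "(nat \<Rightarrow> nat \<Rightarrow> nat) \<Rightarrow> nat \<Rightarrow> nat \<Rightarrow> nat" where
  "cols M = (\<lambda>j i. M i j)"

lemma cols_vecs: "M \<in> matrices F a m \<Longrightarrow> j < m \<Longrightarrow> cols M j \<in> vecs"
  unfolding matrices_def vecs_def cols_def by auto

lemma matfam_bij: "bij_betw (\<lambda>M. restrict (cols M) {..<m}) (matrices F a m) ({..<m} \<rightarrow>\<^sub>E vecs)"
proof (rule bij_betwI[where g = "\<lambda>f i j. if j < m then f j i else 0"])
  show "(\<lambda>M. restrict (cols M) {..<m}) \<in> matrices F a m \<rightarrow> {..<m} \<rightarrow>\<^sub>E vecs"
    using cols_vecs by auto
  show "(\<lambda>f i j. if j < m then f j i else 0) \<in> ({..<m} \<rightarrow>\<^sub>E vecs) \<rightarrow> matrices F a m"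
    unfolding matrices_def vecs_def by (auto simp: PiE_def Pi_def)
next
  fix M assume M: "M \<in> matrices F a m"
  show "(\<lambda>i j. if j < m then restrict (cols M) {..<m} j i else 0) = M"
  proof (intro ext)
    fix i j show "(if j < m then restrict (cols M) {..<m} j i else 0) = M i j"
      using M unfolding matrices_def cols_def by (cases "j < m") auto
  qed
next
  fix f assume f: "f \<in> {..<m} \<rightarrow>\<^sub>E vecs"
  show "restrict (cols (\<lambda>i j. if j < m then f j i else 0)) {..<m} = f"
  proof (rule ext)
    fix j show "restrict (cols (\<lambda>i j. if j < m then f j i else 0)) {..<m} j = f j"
      using f unfolding cols_def PiE_def extensional_def by (cases "j < m") auto
  qed
qed

lemma lin_indep_iff:
  assumes M: "M \<in> matrices F a m" and S: "S \<subseteq> {..<m}"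
  shows "lin_indep_cols F a M S \<longleftrightarrow> indep S (cols M)"
proof -
  have v: "\<And>j. j \<in> S \<Longrightarrow> cols M j \<in> vecs" using cols_vecs[OF M] S by auto
  have "lc S c (cols M) = vz \<longleftrightarrow> (\<forall>i<a. (\<Oplus>j\<in>S. c j \<otimes> M i j) = \<zero>)" if c: "c \<in> S \<rightarrow> carrier F" for c
  proof
    assume h: "lc S c (cols M) = vz"
    show "\<forall>i<a. (\<Oplus>j\<in>S. c j \<otimes> M i j) = \<zero>"
    proof (intro allI impI)
      fix i assume i: "i < a"
      have "lc S c (cols M) i = vz i" using h by simp
      then show "(\<Oplus>j\<in>S. c j \<otimes> M i j) = \<zero>" using i by (simp add: vapp cols_def)
    qed
  next
    assume h: "\<forall>i<a. (\<Oplus>j\<in>S. c j \<otimes> M i j) = \<zero>"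
    show "lc S c (cols M) = vz"
      by (rule vec_eqI) (use c v h in \<open>auto simp: vapp cols_def\<close>)
  qed
  then show ?thesis unfolding lin_indep_cols_def indep_def by auto
qed

lemma rank_iff:
  assumes M: "M \<in> matrices F a m"
  shows "card (span {..<m} (cols M)) = q ^ mat_rank F a m M"
proof -
  have "{card S |S. S \<subseteq> {..<m} \<and> lin_indep_cols F a M S} = {card S |S. S \<subseteq> {..<m} \<and> indep S (cols M)}"
    using lin_indep_iff[OF M] by blast
  then show ?thesis unfolding mat_rank_def using rank_span[of "{..<m}" "cols M"] cols_vecs[OF M] by simp
qed

lemma rank_eq_iff:
  assumes M: "M \<in> matrices F a m"
  shows "mat_rank F a m M = r \<longleftrightarrow> card (span {..<m} (cols M)) = q ^ r"
  using rank_iff[OF M] q_ge2 by (simp add: power_inject_exp)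

lemma span_restrict: "(\<And>j. j \<in> J \<Longrightarrow> A j \<in> vecs) \<Longrightarrow> span J (restrict A J) = span J A"
  by (intro span_cong) auto

lemma card_orbit:
  shows "card (rank_orbit F a m r) = card {A \<in> {..<m} \<rightarrow>\<^sub>E vecs. card (span {..<m} A) = q ^ r}"
proof -
  define \<phi> where "\<phi> = (\<lambda>M. restrict (cols M) {..<m})"
  have b: "bij_betw \<phi> (matrices F a m) ({..<m} \<rightarrow>\<^sub>E vecs)" unfolding \<phi>_def by (rule matfam_bij)
  have eq: "rank_orbit F a m r = {M \<in> matrices F a m. card (span {..<m} (\<phi> M)) = q ^ r}"
    unfolding rank_orbit_def
  proof (rule Collect_cong)
    fix M
    show "(M \<in> matrices F a m \<and> mat_rank F a m M = r) = (M \<in> matrices F a m \<and> card (span {..<m} (\<phi> M)) = q ^ r)"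
    proof (cases "M \<in> matrices F a m")
      case True
      have "span {..<m} (\<phi> M) = span {..<m} (cols M)" unfolding \<phi>_def
        by (rule span_restrict) (use cols_vecs[OF True] in auto)
      then show ?thesis using rank_eq_iff[OF True] True by simp
    qed simp
  qed
  have inj: "inj_on \<phi> {M \<in> matrices F a m. card (span {..<m} (\<phi> M)) = q ^ r}"
    using b unfolding bij_betw_def by (rule inj_on_subset[OF conjunct1]) auto
  have img: "\<phi> ` {M \<in> matrices F a m. card (span {..<m} (\<phi> M)) = q ^ r} = {A \<in> {..<m} \<rightarrow>\<^sub>E vecs. card (span {..<m} A) = q ^ r}"
  proof
    show "\<phi> ` {M \<in> matrices F a m. card (span {..<m} (\<phi> M)) = q ^ r} \<subseteq> {A \<in> {..<m} \<rightarrow>\<^sub>E vecs. card (span {..<m} A) = q ^ r}"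
      using bij_betw_apply[OF b] by blast
    show "{A \<in> {..<m} \<rightarrow>\<^sub>E vecs. card (span {..<m} A) = q ^ r} \<subseteq> \<phi> ` {M \<in> matrices F a m. card (span {..<m} (\<phi> M)) = q ^ r}"
    proof
      fix A assume A: "A \<in> {A \<in> {..<m} \<rightarrow>\<^sub>E vecs. card (span {..<m} A) = q ^ r}"
      then have "A \<in> \<phi> ` matrices F a m" using b unfolding bij_betw_def by blast
      then obtain M where "M \<in> matrices F a m" "A = \<phi> M" by blast
      then show "A \<in> \<phi> ` {M \<in> matrices F a m. card (span {..<m} (\<phi> M)) = q ^ r}" using A by blast
    qed
  qed
  show ?thesis unfolding eq using card_image[OF inj] img by simp
qed


lemma trace_eq:
  assumes T: "\<And>i j. i < a \<Longrightarrow> j < m \<Longrightarrow> T i j = v j \<otimes> u i"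
    and u: "u \<in> vecs" and v: "v \<in> {..<m} \<rightarrow> carrier F" and M: "M \<in> matrices F a m"
  shows "trace_tA F a m T M = dot u (lc {..<m} v (cols M))"
  unfolding trace_tA_def dot_def
proof (rule finsum_cong')
  have "lc {..<m} v (cols M) \<in> vecs" using v cols_vecs[OF M] by (intro lc_vecs) auto
  then show "(\<lambda>i. u i \<otimes> lc {..<m} v (cols M) i) \<in> {..<a} \<rightarrow> carrier F" using u by (auto simp: vecsD)
  fix i assume "i \<in> {..<a}"
  then have i: "i < a" by simp
  have Mc: "\<And>j. j < m \<Longrightarrow> M i j \<in> carrier F" using M i unfolding matrices_def by auto
  have "(\<Oplus>j\<in>{..<m}. T i j \<otimes> M i j) = (\<Oplus>j\<in>{..<m}. u i \<otimes> (v j \<otimes> M i j))"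
  proof (rule finsum_cong')
    have ui: "u i \<in> carrier F" using vecsD[OF u i] .
    show "(\<lambda>j. u i \<otimes> (v j \<otimes> M i j)) \<in> {..<m} \<rightarrow> carrier F" using ui v Mc by (auto simp: Pi_def)
    fix j assume "j \<in> {..<m}"
    then have j: "j < m" by simp
    have c: "u i \<in> carrier F" "v j \<in> carrier F" "M i j \<in> carrier F" using u i v Mc j by (auto simp: vecsD)
    have "T i j \<otimes> M i j = (v j \<otimes> u i) \<otimes> M i j" using T i j by simp
    also have "\<dots> = (u i \<otimes> v j) \<otimes> M i j" using c by (simp add: m_comm)
    also have "\<dots> = u i \<otimes> (v j \<otimes> M i j)" using c by (simp add: m_assoc)
    finally show "T i j \<otimes> M i j = u i \<otimes> (v j \<otimes> M i j)" .
  qed simp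
  also have "\<dots> = u i \<otimes> (\<Oplus>j\<in>{..<m}. v j \<otimes> M i j)"
    using u i v Mc by (intro finsum_rdistr[symmetric]) (auto simp: vecsD)
  also have "\<dots> = u i \<otimes> lc {..<m} v (cols M) i" using i by (simp add: vapp cols_def)
  finally show "(\<Oplus>j\<in>{..<m}. T i j \<otimes> M i j) = u i \<otimes> lc {..<m} v (cols M) i" .
qed simp

lemma vsc_vz: "c \<in> carrier F \<Longrightarrow> vsc c vz = vz"
  by (rule vec_eqI) (auto simp: vapp)

lemma subsp_vz: "subsp {vz}"
  unfolding subsp_def using vadd_vz_left[of vz] vsc_vz by simp

lemma rank1_decomp:
  assumes T: "T \<in> matrices F a m" and r1: "mat_rank F a m T = 1"
  shows "\<exists>u v k. u \<in> vecs \<and> u \<noteq> vz \<and> v \<in> {..<m} \<rightarrow> carrier F \<and> k < m \<and> v k \<noteq> \<zero> \<and>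
     (\<forall>i<a. \<forall>j<m. T i j = v j \<otimes> u i)"
proof -
  define S where "S = span {..<m} (cols T)"
  have cS: "card S = q" using rank_iff[OF T] r1 by (simp add: S_def)
  have cv: "\<And>j. j \<in> {..<m} \<Longrightarrow> cols T j \<in> vecs" using cols_vecs[OF T] by auto
  have sS: "subsp S" unfolding S_def using span_subsp[of "{..<m}" "cols T"] cv by blast
  have fS: "finite S" using subsp_finite[OF sS] .
  obtain k where k: "k < m" "cols T k \<noteq> vz"
  proof (rule ccontr)
    assume "\<not> thesis"
    with that have allz: "\<And>j. j \<in> {..<m} \<Longrightarrow> cols T j \<in> {vz}" by blast
    have "S \<subseteq> {vz}" unfolding S_def using span_least[of "{vz}" "{..<m}" "cols T"] subsp_vz allz by simp
    then have "card S \<le> 1" using card_mono[of "{vz}" S] by simp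
    then show False using cS q_ge2 by simp
  qed
  define u where "u = cols T k"
  have u: "u \<in> vecs" "u \<noteq> vz" using k cv by (auto simp: u_def)
  have uS: "u \<in> S" unfolding S_def u_def using span_mem[of "{..<m}" k "cols T"] k cv by blast
  have L: "vext {vz} u \<subseteq> S" using vext_least[OF sS _ uS] subspD(2)[OF sS] by blast
  have "card (vext {vz} u) = q" using vext_card[OF subsp_vz u(1)] u(2) by simp
  then have LS: "vext {vz} u = S" using card_subset_eq[OF fS L] cS by simp
  have ex: "\<exists>c. c \<in> carrier F \<and> cols T j = vsc c u" if j: "j < m" for j
  proof -
    have "cols T j \<in> S" unfolding S_def using span_mem[of "{..<m}" j "cols T"] j cv by blast
    then obtain c where "c \<in> carrier F" "cols T j = vadd vz (vsc c u)"
      unfolding LS[symmetric] vext_def by blast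
    then show ?thesis using vadd_vz_left[of "vsc c u"] u by auto
  qed
  define v where "v = (\<lambda>j. SOME c. c \<in> carrier F \<and> cols T j = vsc c u)"
  have v: "\<And>j. j < m \<Longrightarrow> v j \<in> carrier F \<and> cols T j = vsc (v j) u"
  proof -
    fix j assume "j < m"
    from someI_ex[OF ex[OF this]] show "v j \<in> carrier F \<and> cols T j = vsc (v j) u" unfolding v_def .
  qed
  have vk: "v k \<noteq> \<zero>"
  proof
    assume "v k = \<zero>"
    then have "u = vsc \<zero> u" using v[OF k(1)] by (simp add: u_def)
    then show False using vsc_zero[OF u(1)] u(2) by simp
  qed
  have "\<forall>i<a. \<forall>j<m. T i j = v j \<otimes> u i"
  proof (intro allI impI)
    fix i j assume i: "i < a" and j: "j < m"
    have "T i j = cols T j i" by (simp add: cols_def)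
    also have "\<dots> = v j \<otimes> u i" using v[OF j] i by (simp add: vapp)
    finally show "T i j = v j \<otimes> u i" .
  qed
  then show ?thesis using u v vk k by (intro exI[of _ u] exI[of _ v] exI[of _ k]) auto
qed


lemma tau_sigma:
  assumes c: "c \<in> carrier F" "c \<noteq> \<zero>" and y: "y \<in> vecs" and L: "L \<in> vecs"
  shows "vadd (vsc c (vsc (inv c) (vadd y (vsc (\<ominus> \<one>) L)))) L = y"
proof (rule vec_eqI)
  have ic: "inv c \<in> carrier F" using inv_cl[OF c] .
  show "vadd (vsc c (vsc (inv c) (vadd y (vsc (\<ominus> \<one>) L)))) L \<in> vecs" using c ic y L by simp
  fix i assume i: "i < a"
  have yi: "y i \<in> carrier F" and Li: "L i \<in> carrier F" using y L i vecsD by auto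
  have "c \<otimes> (inv c \<otimes> (y i \<oplus> (\<ominus> \<one>) \<otimes> L i)) = (c \<otimes> inv c) \<otimes> (y i \<oplus> (\<ominus> \<one>) \<otimes> L i)"
    using c ic yi Li by (simp add: m_assoc)
  also have "\<dots> = y i \<oplus> \<ominus> L i" using inv_r[OF c] yi Li by (simp add: l_minus)
  finally have "c \<otimes> (inv c \<otimes> (y i \<oplus> (\<ominus> \<one>) \<otimes> L i)) \<oplus> L i = y i"
    using yi Li by (simp add: a_assoc l_neg)
  then show "vadd (vsc c (vsc (inv c) (vadd y (vsc (\<ominus> \<one>) L)))) L i = y i" using i by (simp add: vapp)
qed (rule y)

lemma sigma_tau:
  assumes c: "c \<in> carrier F" "c \<noteq> \<zero>" and w: "w \<in> vecs" and L: "L \<in> vecs"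
  shows "vsc (inv c) (vadd (vadd (vsc c w) L) (vsc (\<ominus> \<one>) L)) = w"
proof (rule vec_eqI)
  have ic: "inv c \<in> carrier F" using inv_cl[OF c] .
  show "vsc (inv c) (vadd (vadd (vsc c w) L) (vsc (\<ominus> \<one>) L)) \<in> vecs" using c ic w L by simp
  fix i assume i: "i < a"
  have wi: "w i \<in> carrier F" and Li: "L i \<in> carrier F" using w L i vecsD by auto
  have "c \<otimes> w i \<oplus> L i \<oplus> (\<ominus> \<one>) \<otimes> L i = c \<otimes> w i" using c wi Li by (simp add: l_minus a_assoc r_neg)
  then have "inv c \<otimes> (c \<otimes> w i \<oplus> L i \<oplus> (\<ominus> \<one>) \<otimes> L i) = (inv c \<otimes> c) \<otimes> w i"
    using c ic wi by (simp add: m_assoc)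
  also have "\<dots> = w i" using inv_l[OF c] wi by simp
  finally show "vsc (inv c) (vadd (vadd (vsc c w) L) (vsc (\<ominus> \<one>) L)) i = w i" using i by (simp add: vapp)
qed (rule w)

lemma vext_eq:
  assumes S: "subsp S" and L: "L \<in> S" and y: "y \<in> vecs" and c: "c \<in> carrier F" "c \<noteq> \<zero>"
  shows "vext S (vsc (inv c) (vadd y (vsc (\<ominus> \<one>) L))) = vext S y"
proof -
  note sd = subspD[OF S]
  have Lv: "L \<in> vecs" using L sd(1) by auto
  have ic: "inv c \<in> carrier F" using inv_cl[OF c] .
  have m1: "\<ominus> \<one> \<in> carrier F" by simp
  define z where "z = vsc (inv c) (vadd y (vsc (\<ominus> \<one>) L))"
  have zv: "z \<in> vecs" using ic y Lv by (simp add: z_def)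
  have Ey: "subsp (vext S y)" using vext_subsp[OF S y] .
  have Ez: "subsp (vext S z)" using vext_subsp[OF S zv] .
  have "z \<in> vext S y"
  proof -
    have "L \<in> vext S y" using vext_sub[OF S y] L by blast
    then have "vadd y (vsc (\<ominus> \<one>) L) \<in> vext S y"
      using subspD(3,4)[OF Ey] vext_w[OF S y] m1 by blast
    then show ?thesis unfolding z_def using subspD(4)[OF Ey] ic by blast
  qed
  then have 1: "vext S z \<subseteq> vext S y" using vext_least[OF Ey vext_sub[OF S y]] by blast
  have "y = vadd (vsc c z) L" unfolding z_def using tau_sigma[OF c y Lv] by simp
  moreover have "vadd (vsc c z) L \<in> vext S z"
    using subspD(3,4)[OF Ez] vext_w[OF S zv] vext_sub[OF S zv] L c by blast
  ultimately have "y \<in> vext S z" by simp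
  then have 2: "vext S y \<subseteq> vext S z" using vext_least[OF Ez vext_sub[OF S zv]] by blast
  show ?thesis using 1 2 unfolding z_def by blast
qed


lemma subsp_vecs: "subsp vecs"
  unfolding subsp_def by auto

lemma qmul_iff: "q * X = q ^ r \<longleftrightarrow> 0 < r \<and> X = q ^ (r - 1)"
proof (cases r)
  case 0
  have "q \<noteq> 1" using q_ge2 by simp
  then show ?thesis using 0 by simp
next
  case (Suc r')
  then show ?thesis using q_ge2 by simp
qed

lemma inner_fourier:
  assumes ch: "nontriv_add_char F \<psi>" and u: "u \<in> vecs" "u \<noteq> vz" and S: "subsp S"
  shows "(\<Sum>w\<in>vecs. if card (vext S w) = q ^ r then \<psi> (dot u w) else 0) =
    (if S \<subseteq> uperp u then of_nat (if card S = q ^ r then q ^ r else 0) -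
        of_nat (if 0 < r \<and> card S = q ^ (r - 1) then q ^ (r - 1) else 0) else 0)"
proof -
  have Sv: "S \<subseteq> vecs" using subspD(1)[OF S] .
  have fS: "finite S" using subsp_finite[OF S] .
  define X where "X = card S"
  define \<Sigma>S where "\<Sigma>S = (\<Sum>w\<in>S. \<psi> (dot u w))"
  have split: "vecs = S \<union> (vecs - S)" using Sv by auto
  have "(\<Sum>w\<in>vecs. if card (vext S w) = q ^ r then \<psi> (dot u w) else 0) =
     (\<Sum>w\<in>S. if card (vext S w) = q ^ r then \<psi> (dot u w) else 0) +
     (\<Sum>w\<in>vecs - S. if card (vext S w) = q ^ r then \<psi> (dot u w) else 0)"
    using fin_vecs fS by (subst split) (rule sum.union_disjoint, auto)
  also have "(\<Sum>w\<in>S. if card (vext S w) = q ^ r then \<psi> (dot u w) else 0) =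
     (\<Sum>w\<in>S. if X = q ^ r then \<psi> (dot u w) else 0)"
    using vext_in[OF S] by (intro sum.cong) (auto simp: X_def)
  also have "\<dots> = (if X = q ^ r then \<Sigma>S else 0)" by (simp add: \<Sigma>S_def)
  also have "(\<Sum>w\<in>vecs - S. if card (vext S w) = q ^ r then \<psi> (dot u w) else 0) =
     (\<Sum>w\<in>vecs - S. if q * X = q ^ r then \<psi> (dot u w) else 0)"
    using vext_card[OF S] by (intro sum.cong) (auto simp: X_def)
  also have "\<dots> = (if q * X = q ^ r then (\<Sum>w\<in>vecs - S. \<psi> (dot u w)) else 0)" by simp
  also have "(\<Sum>w\<in>vecs - S. \<psi> (dot u w)) = (\<Sum>w\<in>vecs. \<psi> (dot u w)) - \<Sigma>S"
    unfolding \<Sigma>S_def using fin_vecs Sv by (rule sum_diff)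
  also have "(\<Sum>w\<in>vecs. \<psi> (dot u w)) = 0"
  proof -
    obtain w0 where "w0 \<in> vecs" "dot u w0 \<noteq> \<zero>" using exists_nonperp[OF u] by blast
    then have "\<not> vecs \<subseteq> uperp u" by (auto simp: uperp_def)
    then show ?thesis using char_sum[OF ch subsp_vecs u(1)] by simp
  qed
  also have "\<Sigma>S = (if S \<subseteq> uperp u then of_nat X else 0)" unfolding \<Sigma>S_def X_def by (rule char_sum[OF ch S u(1)])
  finally have eq: "(\<Sum>w\<in>vecs. if card (vext S w) = q ^ r then \<psi> (dot u w) else 0) =
     (if X = q ^ r then (if S \<subseteq> uperp u then of_nat X else 0) else 0) +
     (if q * X = q ^ r then 0 - (if S \<subseteq> uperp u then of_nat X else 0) else 0)" .
  have nb: "\<not> (X = q ^ r \<and> q * X = q ^ r)"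
  proof
    assume h: "X = q ^ r \<and> q * X = q ^ r"
    then have h1: "X = q ^ r" and h2: "q * X = q ^ r" by auto
    have e: "q * q ^ r = q ^ r" using h2 unfolding h1 .
    have "0 < q ^ r" using q_ge2 by simp
    moreover have "2 * q ^ r \<le> q * q ^ r" using q_ge2 by (intro mult_le_mono1)
    ultimately show False using e by linarith
  qed
  show ?thesis unfolding eq X_def[symmetric]
    using nb qmul_iff[of X r] by (cases "S \<subseteq> uperp u"; cases "X = q ^ r"; cases "q * X = q ^ r") auto
qed


lemma sum_if_card:
  assumes "finite P"
  shows "(\<Sum>B\<in>P. if Q B then (c::nat) else 0) = c * card {B \<in> P. Q B}"
  using assms by (simp add: card_filter_sum sum_distrib_left if_distrib cong: if_cong)

lemma fourier_fam:
  assumes ch: "nontriv_add_char F \<psi>" and u: "u \<in> vecs" "u \<noteq> vz" and v: "v \<in> {..<m} \<rightarrow> carrier F"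
    and k: "k < m" "v k \<noteq> \<zero>"
  shows "(\<Sum>A\<in>{..<m} \<rightarrow>\<^sub>E vecs. if card (span {..<m} A) = q ^ r then \<psi> (dot u (lc {..<m} v A)) else 0) =
    of_nat (q ^ r * (gq q (m - 1) r * Pq q (a - 1) r)) -
    (if 0 < r then of_nat (q ^ (r - 1) * (gq q (m - 1) (r - 1) * Pq q (a - 1) (r - 1))) else 0)"
proof -
  define J where "J = {..<m} - {k}"
  have M: "{..<m} = insert k J" using k by (auto simp: J_def)
  have fJ: "finite J" and kJ: "k \<notin> J" by (auto simp: J_def)
  have cJ: "card J = m - 1" using k by (simp add: J_def)
  have vI: "v \<in> insert k J \<rightarrow> carrier F" using v M by simp
  have vJ: "v \<in> J \<rightarrow> carrier F" using vI by auto
  have vk: "v k \<in> carrier F" using vI by auto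
  define U where "U = uperp u"
  have sU: "subsp U" unfolding U_def by (rule uperp_subsp[OF u(1)])
  have cU: "card U = q ^ (a - 1)" unfolding U_def by (rule card_uperp[OF u])
  define f where "f = (\<lambda>A. if card (span (insert k J) A) = q ^ r then \<psi> (dot u (lc (insert k J) v A)) else 0)"
  define h where "h = (\<lambda>S. if S \<subseteq> U then of_nat (if card S = q ^ r then q ^ r else 0) -
        of_nat (if 0 < r \<and> card S = q ^ (r - 1) then q ^ (r - 1) else 0) else (0::complex))"
  have "(\<Sum>A\<in>{..<m} \<rightarrow>\<^sub>E vecs. if card (span {..<m} A) = q ^ r then \<psi> (dot u (lc {..<m} v A)) else 0) =
      (\<Sum>A\<in>insert k J \<rightarrow>\<^sub>E vecs. f A)" unfolding M f_def ..
  also have "\<dots> = (\<Sum>B\<in>J \<rightarrow>\<^sub>E vecs. \<Sum>w\<in>vecs. f (B(k := w)))" by (rule sum_PiE_insert[OF kJ])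
  also have "\<dots> = (\<Sum>B\<in>J \<rightarrow>\<^sub>E vecs. h (span J B))"
  proof (rule sum.cong[OF refl])
    fix B assume B: "B \<in> J \<rightarrow>\<^sub>E vecs"
    have vB: "\<And>j. j \<in> J \<Longrightarrow> B j \<in> vecs" using B by auto
    define L where "L = lc J v B"
    have Lv: "L \<in> vecs" using vJ vB by (simp add: L_def)
    have sS: "subsp (span J B)" using span_subsp[of J B] fJ vB by blast
    have LS: "L \<in> span J B" unfolding L_def span_def using vJ by blast
    define \<sigma> where "\<sigma> = (\<lambda>y. vsc (inv (v k)) (vadd y (vsc (\<ominus> \<one>) L)))"
    define \<tau> where "\<tau> = (\<lambda>w. vadd (vsc (v k) w) L)"
    have ic: "inv (v k) \<in> carrier F" using inv_cl[OF vk k(2)] .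
    have \<sigma>v: "\<And>y. y \<in> vecs \<Longrightarrow> \<sigma> y \<in> vecs" using ic Lv by (simp add: \<sigma>_def)
    have \<tau>v: "\<And>y. y \<in> vecs \<Longrightarrow> \<tau> y \<in> vecs" using vk Lv by (simp add: \<tau>_def)
    have "(\<Sum>y\<in>vecs. f (B(k := \<sigma> y))) = (\<Sum>w\<in>vecs. f (B(k := w)))"
    proof (rule sum.reindex_bij_witness[where i = \<tau> and j = \<sigma>])
      fix y assume y: "y \<in> vecs"
      show "\<tau> (\<sigma> y) = y" unfolding \<tau>_def \<sigma>_def by (rule tau_sigma[OF vk k(2) y Lv])
      show "\<sigma> y \<in> vecs" by (rule \<sigma>v[OF y])
      show "\<sigma> (\<tau> y) = y" unfolding \<tau>_def \<sigma>_def by (rule sigma_tau[OF vk k(2) y Lv])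
      show "\<tau> y \<in> vecs" by (rule \<tau>v[OF y])
      show "f (B(k := \<sigma> y)) = f (B(k := \<sigma> y))" ..
    qed
    moreover have "(\<Sum>y\<in>vecs. f (B(k := \<sigma> y))) =
        (\<Sum>y\<in>vecs. if card (vext (span J B) y) = q ^ r then \<psi> (dot u y) else 0)"
    proof (rule sum.cong[OF refl])
      fix y assume y: "y \<in> vecs"
      define z where "z = \<sigma> y"
      have zv: "z \<in> vecs" using \<sigma>v[OF y] by (simp add: z_def)
      have vBz: "\<And>j. j \<in> insert k J \<Longrightarrow> (B(k := z)) j \<in> vecs" using vB zv by auto
      have "lc (insert k J) v (B(k := z)) = vadd (vsc (v k) ((B(k := z)) k)) (lc J v (B(k := z)))"
        by (rule lc_insert[OF fJ kJ vI vBz])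
      also have "lc J v (B(k := z)) = L" unfolding L_def using kJ vJ vB by (intro lc_cong) auto
      also have "(B(k := z)) k = z" by simp
      finally have lcz0: "lc (insert k J) v (B(k := z)) = vadd (vsc (v k) z) L" .
      have tz: "vadd (vsc (v k) z) L = y" unfolding z_def \<sigma>_def by (rule tau_sigma[OF vk k(2) y Lv])
      have lcz: "lc (insert k J) v (B(k := z)) = y" using lcz0 tz by (rule trans)
      have e1: "span (insert k J) (B(k := z)) = vext (span J (B(k := z))) ((B(k := z)) k)"
        by (rule span_insert[OF fJ kJ vBz])
      have e2: "span J (B(k := z)) = span J B" using kJ vB by (intro span_cong) auto
      have e3: "(B(k := z)) k = z" by simp
      have "span (insert k J) (B(k := z)) = vext (span J B) z" by (simp only: e1 e2 e3)
      also have "\<dots> = vext (span J B) y" unfolding z_def \<sigma>_def by (rule vext_eq[OF sS LS y vk k(2)])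
      finally have spz: "span (insert k J) (B(k := z)) = vext (span J B) y" .
      show "f (B(k := \<sigma> y)) = (if card (vext (span J B) y) = q ^ r then \<psi> (dot u y) else 0)"
        unfolding f_def z_def[symmetric] spz lcz ..
    qed
    moreover have "(\<Sum>y\<in>vecs. if card (vext (span J B) y) = q ^ r then \<psi> (dot u y) else 0) = h (span J B)"
      unfolding h_def U_def by (rule inner_fourier[OF ch u sS])
    ultimately show "(\<Sum>w\<in>vecs. f (B(k := w))) = h (span J B)" by simp
  qed
  also have "\<dots> = (\<Sum>B\<in>J \<rightarrow>\<^sub>E vecs. if B \<in> J \<rightarrow>\<^sub>E U then
       of_nat (if card (span J B) = q ^ r then q ^ r else 0) -
       of_nat (if 0 < r \<and> card (span J B) = q ^ (r - 1) then q ^ (r - 1) else 0) else (0::complex))"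
  proof (rule sum.cong[OF refl])
    fix B assume B: "B \<in> J \<rightarrow>\<^sub>E vecs"
    have vB: "\<And>j. j \<in> J \<Longrightarrow> B j \<in> vecs" using B by auto
    have "span J B \<subseteq> U \<longleftrightarrow> B \<in> J \<rightarrow>\<^sub>E U"
    proof
      assume "span J B \<subseteq> U"
      then have "\<And>j. j \<in> J \<Longrightarrow> B j \<in> U" using span_mem[of J _ B] fJ vB by blast
      then show "B \<in> J \<rightarrow>\<^sub>E U" using B by (auto simp: PiE_def)
    next
      assume "B \<in> J \<rightarrow>\<^sub>E U"
      then show "span J B \<subseteq> U" using span_least[of U J B] sU fJ by auto
    qed
    then show "h (span J B) = (if B \<in> J \<rightarrow>\<^sub>E U then
       of_nat (if card (span J B) = q ^ r then q ^ r else 0) -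
       of_nat (if 0 < r \<and> card (span J B) = q ^ (r - 1) then q ^ (r - 1) else 0) else (0::complex))"
      unfolding h_def by simp
  qed
  also have "\<dots> = (\<Sum>B\<in>J \<rightarrow>\<^sub>E U. of_nat (if card (span J B) = q ^ r then q ^ r else 0) -
       of_nat (if 0 < r \<and> card (span J B) = q ^ (r - 1) then q ^ (r - 1) else 0))"
  proof -
    have sub: "J \<rightarrow>\<^sub>E U \<subseteq> J \<rightarrow>\<^sub>E vecs" using subspD(1)[OF sU] by (auto simp: PiE_def)
    have "{B \<in> J \<rightarrow>\<^sub>E vecs. B \<in> J \<rightarrow>\<^sub>E U} = J \<rightarrow>\<^sub>E U" using sub by blast
    moreover have "finite (J \<rightarrow>\<^sub>E vecs)" using fJ fin_vecs by (simp add: finite_PiE)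
    ultimately show ?thesis by (simp add: sum.inter_filter[symmetric])
  qed
  also have "\<dots> = of_nat (\<Sum>B\<in>J \<rightarrow>\<^sub>E U. if card (span J B) = q ^ r then q ^ r else 0) -
      of_nat (\<Sum>B\<in>J \<rightarrow>\<^sub>E U. if 0 < r \<and> card (span J B) = q ^ (r - 1) then q ^ (r - 1) else 0)"
    by (simp add: sum_subtractf)
  also have "(\<Sum>B\<in>J \<rightarrow>\<^sub>E U. if card (span J B) = q ^ r then q ^ r else 0) =
      q ^ r * card {B \<in> J \<rightarrow>\<^sub>E U. card (span J B) = q ^ r}"
    using fJ subsp_finite[OF sU] by (intro sum_if_card) (simp add: finite_PiE)
  also have "card {B \<in> J \<rightarrow>\<^sub>E U. card (span J B) = q ^ r} = gq q (m - 1) r * Pq q (a - 1) r"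
    using cnt_formula[OF sU cU fJ] cJ by simp
  also have "(\<Sum>B\<in>J \<rightarrow>\<^sub>E U. if 0 < r \<and> card (span J B) = q ^ (r - 1) then q ^ (r - 1) else 0) =
      (if 0 < r then q ^ (r - 1) * card {B \<in> J \<rightarrow>\<^sub>E U. card (span J B) = q ^ (r - 1)} else 0)"
    using fJ subsp_finite[OF sU] sum_if_card[of "J \<rightarrow>\<^sub>E U" "\<lambda>B. card (span J B) = q ^ (r - 1)" "q ^ (r - 1)"]
    by (cases "0 < r") (simp_all add: finite_PiE)
  also have "card {B \<in> J \<rightarrow>\<^sub>E U. card (span J B) = q ^ (r - 1)} = gq q (m - 1) (r - 1) * Pq q (a - 1) (r - 1)"
    using cnt_formula[OF sU cU fJ] cJ by simp
  finally show ?thesis by (cases "0 < r") simp_all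
qed


lemma card_orbit_formula: "card (rank_orbit F a m r) = gq q m r * Pq q a r"
  using card_orbit cnt_formula[OF subsp_vecs card_vecs, of "{..<m}" r] by simp

lemma fourier_value:
  assumes ch: "nontriv_add_char F \<psi>" and T: "T \<in> matrices F a m" and r1: "mat_rank F a m T = 1"
  shows "fourier_orbit F \<psi> a m r T = of_nat (q ^ r * (gq q (m - 1) r * Pq q (a - 1) r)) -
    (if 0 < r then of_nat (q ^ (r - 1) * (gq q (m - 1) (r - 1) * Pq q (a - 1) (r - 1))) else 0)"
proof -
  obtain u v k where u: "u \<in> vecs" "u \<noteq> vz" and v: "v \<in> {..<m} \<rightarrow> carrier F" and k: "k < m" "v k \<noteq> \<zero>"
    and Tuv: "\<forall>i<a. \<forall>j<m. T i j = v j \<otimes> u i"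
    using rank1_decomp[OF T r1] by blast
  define \<phi> where "\<phi> = (\<lambda>M. restrict (cols M) {..<m})"
  have b: "bij_betw \<phi> (matrices F a m) ({..<m} \<rightarrow>\<^sub>E vecs)" unfolding \<phi>_def by (rule matfam_bij)
  have finM: "finite (matrices F a m)" using bij_betw_finite[OF b] fin_vecs by (simp add: finite_PiE)
  define G where "G = (\<lambda>A. if card (span {..<m} A) = q ^ r then \<psi> (dot u (lc {..<m} v A)) else 0)"
  have "fourier_orbit F \<psi> a m r T = (\<Sum>M\<in>matrices F a m. if mat_rank F a m M = r then \<psi> (trace_tA F a m T M) else 0)"
    unfolding fourier_orbit_def rank_orbit_def using finM by (rule sum.inter_filter)
  also have "\<dots> = (\<Sum>M\<in>matrices F a m. G (\<phi> M))"
  proof (rule sum.cong[OF refl])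
    fix M assume M: "M \<in> matrices F a m"
    have cv: "\<And>j. j \<in> {..<m} \<Longrightarrow> cols M j \<in> vecs" using cols_vecs[OF M] by auto
    have "span {..<m} (\<phi> M) = span {..<m} (cols M)" unfolding \<phi>_def by (rule span_restrict[OF cv])
    moreover have "lc {..<m} v (\<phi> M) = lc {..<m} v (cols M)" unfolding \<phi>_def using v cv by (intro lc_cong) auto
    moreover have "trace_tA F a m T M = dot u (lc {..<m} v (cols M))"
      using trace_eq[of m T v u M] Tuv u v M by blast
    ultimately show "(if mat_rank F a m M = r then \<psi> (trace_tA F a m T M) else 0) = G (\<phi> M)"
      unfolding G_def using rank_eq_iff[OF M] by simp
  qed
  also have "\<dots> = (\<Sum>A\<in>{..<m} \<rightarrow>\<^sub>E vecs. G A)" by (rule sum.reindex_bij_betw[OF b])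
  also have "(\<Sum>A\<in>{..<m} \<rightarrow>\<^sub>E vecs. G A) = of_nat (q ^ r * (gq q (m - 1) r * Pq q (a - 1) r)) -
    (if 0 < r then of_nat (q ^ (r - 1) * (gq q (m - 1) (r - 1) * Pq q (a - 1) (r - 1))) else 0)"
    unfolding G_def by (rule fourier_fam[OF ch u v k])
  finally show ?thesis .
qed

end

theorem fact8p2:
  fixes n r :: nat
  assumes "r < n div 2"
  shows "(\<forall>(F :: nat ring) \<psi> T.
            field F \<and> finite (carrier F) \<and> nontriv_add_char F \<psi> \<and>
            T \<in> matrices F (n div 2) (n - n div 2) \<and> mat_rank F (n div 2) (n - n div 2) T = 1
            \<longrightarrow> (\<exists>k::nat. k > 0 \<and> fourier_orbit F \<psi> (n div 2) (n - n div 2) r T = of_nat k))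
       \<and> (\<forall>\<epsilon>>0. \<exists>Q::nat. \<forall>(F :: nat ring) \<psi> T.
            field F \<and> finite (carrier F) \<and> card (carrier F) \<ge> Q \<and> nontriv_add_char F \<psi> \<and>
            T \<in> matrices F (n div 2) (n - n div 2) \<and> mat_rank F (n div 2) (n - n div 2) T = 1
            \<longrightarrow> cmod (fourier_orbit F \<psi> (n div 2) (n - n div 2) r T
                      - of_real (real (card (rank_orbit F (n div 2) (n - n div 2) r))
                                 / real (card (carrier F)) ^ r))
                \<le> \<epsilon> * real (card (rank_orbit F (n div 2) (n - n div 2) r))
                      / real (card (carrier F)) ^ r)"
  proof -
  define a where "a = n div 2"
  define m where "m = n - n div 2"
  have a1: "1 \<le> a" and am: "a \<le> m" and ra: "r < a" using assms by (auto simp: a_def m_def)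
  have part1: "\<exists>k::nat. k > 0 \<and> fourier_orbit F \<psi> a m r T = of_nat k"
    if F: "field F" "finite (carrier F)" and ch: "nontriv_add_char F \<psi>"
      and T: "T \<in> matrices F a m" "mat_rank F a m T = 1" for F \<psi> T
  proof -
    interpret V: vsp F a using F by (simp add: vsp_def vsp_axioms_def)
    define D1 where "D1 = card (carrier F) ^ r * (gq (card (carrier F)) (m - 1) r * Pq (card (carrier F)) (a - 1) r)"
    define D2 where "D2 = (if 0 < r then card (carrier F) ^ (r - 1) * (gq (card (carrier F)) (m - 1) (r - 1) * Pq (card (carrier F)) (a - 1) (r - 1)) else 0)"
    have lt: "D2 < D1" unfolding D1_def D2_def using positivity[OF V.q_ge2, of r "a - 1" "m - 1"] ra am by simp
    have "fourier_orbit F \<psi> a m r T = of_nat D1 - of_nat D2"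
      using V.fourier_value[OF ch T, of r] unfolding D1_def D2_def by simp
    also have "\<dots> = of_nat (D1 - D2)" using lt by (simp add: of_nat_diff)
    finally show ?thesis using lt by (intro exI[of _ "D1 - D2"]) simp
  qed
  have part2: "\<exists>Q::nat. \<forall>(F :: nat ring) \<psi> T.
            field F \<and> finite (carrier F) \<and> card (carrier F) \<ge> Q \<and> nontriv_add_char F \<psi> \<and>
            T \<in> matrices F a m \<and> mat_rank F a m T = 1
            \<longrightarrow> cmod (fourier_orbit F \<psi> a m r T
                      - of_real (real (card (rank_orbit F a m r)) / real (card (carrier F)) ^ r))
                \<le> \<epsilon> * real (card (rank_orbit F a m r)) / real (card (carrier F)) ^ r"
    if e: "\<epsilon> > 0" for \<epsilon>
  proof -
    obtain Q where Q: "\<And>q. Q \<le> q \<Longrightarrow> 2 \<le> q \<Longrightarrow> \<bar>Dval q a m r - Nval q a m r / real q ^ r\<bar> \<le> \<epsilon> * Nval q a m r / real q ^ r"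
      using asym[OF a1 am ra e] by blast
    show ?thesis
    proof (intro exI[of _ Q] allI impI)
      fix F :: "nat ring" and \<psi> T
      assume h: "field F \<and> finite (carrier F) \<and> card (carrier F) \<ge> Q \<and> nontriv_add_char F \<psi> \<and>
            T \<in> matrices F a m \<and> mat_rank F a m T = 1"
      interpret V: vsp F a using h by (simp add: vsp_def vsp_axioms_def)
      define q where "q = card (carrier F)"
      have fv: "fourier_orbit F \<psi> a m r T = complex_of_real (Dval q a m r)"
        using V.fourier_value[of \<psi> T m r] h unfolding Dval_def q_def by (cases "0 < r") simp_all
      have co: "real (card (rank_orbit F a m r)) = Nval q a m r"
        using V.card_orbit_formula[of m r] unfolding Nval_def q_def by simp
      have "cmod (fourier_orbit F \<psi> a m r T - of_real (real (card (rank_orbit F a m r)) / real q ^ r)) =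
          \<bar>Dval q a m r - Nval q a m r / real q ^ r\<bar>"
        unfolding fv co of_real_diff[symmetric] norm_of_real ..
      also have "\<dots> \<le> \<epsilon> * Nval q a m r / real q ^ r" using Q h V.q_ge2 unfolding q_def by blast
      finally show "cmod (fourier_orbit F \<psi> a m r T
                      - of_real (real (card (rank_orbit F a m r)) / real (card (carrier F)) ^ r))
                \<le> \<epsilon> * real (card (rank_orbit F a m r)) / real (card (carrier F)) ^ r"
        unfolding co q_def .
    qed
  qed
  show ?thesis using part1 part2 unfolding a_def m_def by blast
qed

end
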